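(* Let $\kappa_*>0$, $0<L<U<\infty$, $0<\beta<1$, and let $H^*$ be a probability measure on $[L,U]$. Suppose $(X_i,\theta_i)$, $i=1,\dots,n$, are i.i.d. from $X_i\mid\theta_i\sim\mathrm{Poi}(\theta_i)$, $\theta_i\mid\lambda_i\sim\mathrm{Gamma}(\kappa_*,\lambda_i)$ (shape-rate), $\lambda_i\sim H^*$, and let $\widehat H_n\in\arg\max_{H\in\mathcal P([L,U])}\sum_{i=1}^n\log f_H(X_i)$. Define $$\hat k_n=\sup\Big\{k\ge0:\sum_{x=0}^\infty\int_0^\infty\mathbf 1\big(\pi_{\widehat H_n}(\theta\mid x)\ge k\big)p_\theta(x)g_{\widehat H_n}(\theta)\,d\theta\ge1-\beta\Big\},\qquad \hat{\mathcal I}_n(x)=\{\theta\ge0:\pi_{\widehat H_n}(\theta\mid x)\ge\hat k_n\}.$$ Let $(X,\theta)$ be independent of $\{(X_i,\theta_i)\}_{i=1}^n$ with the same joint law. Let $\alpha_*\in(0,1/2)$ be the exponent (depending only on $(L,U)$) for which $\mathbb E_{H^*}[\mathrm{TV}(g_{\widehat H_n},g_{H^*})]\le C n^{-\alpha_*}(\log n)^{(1-\kappa_* )_++\alpha_*}$ holds with $C$ depending only on $(\kappa_*,L,U)$. Then $$\mathbb E_{H^*}\Big[\big|\mathbb P_{H^*}(\theta\in\hat{\mathcal I}_n(X)\mid\widehat H_n)-(1-\beta)\big|\Big]\le C'\,n^{-\alpha_*}(\log n)^{(1-\kappa_* )_++\alpha_*},$$ with $C'>0$ depending only on $(\kappa_*,L,U)$,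 where $\mathbb P_{H^*}(\theta\in\hat{\mathcal I}_n(X)\mid\widehat H_n)=\sum_{x=0}^\infty\int_0^\infty\mathbf 1(\theta\in\hat{\mathcal I}_n(x))p_\theta(x)g_{H^*}(\theta)\,d\theta$.
   Context: For $H$ a probability measure on $(0,\infty)$: $f_H(x)=\int\frac{\Gamma(x+\kappa_* )}{x!\,\Gamma(\kappa_* )}\left(\frac{1}{\lambda+1}\right)^x\left(\frac{\lambda}{\lambda+1}\right)^{\kappa_*}dH(\lambda)$, $g_H(\theta)=\int\frac{\lambda^{\kappa_*}}{\Gamma(\kappa_* )}\theta^{\kappa_*-1}e^{-\lambda\theta}dH(\lambda)$, $p_\theta(x)=e^{-\theta}\theta^x/x!$, and $\pi_H(\theta\mid x)=p_\theta(x)g_H(\theta)/f_H(x)$. $\mathrm{TV}(g,g')=\frac12\int_0^\infty|g-g'|$; $(t)_+=\max(t,0)$; $\mathcal P(A)$ is the set of probability measures on $A$. *)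

theory Defs
  imports "HOL-Probability.Probability"
begin

definition probs_on :: "real \<Rightarrow> real \<Rightarrow> real measure set" where
  "probs_on L U = {H. prob_space H \<and> sets H = sets borel \<and> emeasure H {L..U} = 1}"

text \<open>Negative-binomial mixture marginal f_H(x).\<close>
definition fH :: "real \<Rightarrow> real measure \<Rightarrow> nat \<Rightarrow> real" where
  "fH \<kappa> H x = (\<integral>lam. Gamma (real x + \<kappa>) / (fact x * Gamma \<kappa>)
        * (1 / (lam + 1)) ^ x * (lam / (lam + 1)) powr \<kappa> \<partial>H)"

definition gH :: "real \<Rightarrow> real measure \<Rightarrow> real \<Rightarrow> real" where
  "gH \<kappa> H \<theta> = (\<integral>lam. lam powr \<kappa> / Gamma \<kappa> * \<theta> powr (\<kappa> - 1) * exp (- lam * \<theta>) \<partial>H)"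

definition pois :: "real \<Rightarrow> nat \<Rightarrow> real" where
  "pois \<theta> x = exp (- \<theta>) * \<theta> ^ x / fact x"

definition post :: "real \<Rightarrow> real measure \<Rightarrow> real \<Rightarrow> nat \<Rightarrow> real" where
  "post \<kappa> H \<theta> x = pois \<theta> x * gH \<kappa> H \<theta> / fH \<kappa> H x"

definition TV :: "(real \<Rightarrow> real) \<Rightarrow> (real \<Rightarrow> real) \<Rightarrow> real" where
  "TV g g' = 1/2 * (LINT \<theta>:{0..}|lborel. \<bar>g \<theta> - g' \<theta>\<bar>)"

definition pos_part :: "real \<Rightarrow> real" where
  "pos_part t = max t 0"

definition is_npmle :: "real \<Rightarrow> real \<Rightarrow> real \<Rightarrow> (nat list \<Rightarrow> real measure) \<Rightarrow> bool" where
  "is_npmle \<kappa> L U Hhat \<longleftrightarrow> (\<forall>xs. Hhat xs \<in> probs_on L U \<and>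
      (\<forall>H\<in>probs_on L U. (\<Sum>x\<leftarrow>xs. ln (fH \<kappa> H x)) \<le> (\<Sum>x\<leftarrow>xs. ln (fH \<kappa> (Hhat xs) x))))"

text \<open>Expectation over an i.i.d. sample X_1..X_n with marginal pmf f_{H*}
  (the theta_i integrate out; the sample space is countable).\<close>
definition sample_exp :: "real \<Rightarrow> real measure \<Rightarrow> nat \<Rightarrow> (nat list \<Rightarrow> real) \<Rightarrow> real" where
  "sample_exp \<kappa> Hs n F = infsum (\<lambda>xs. (\<Prod>x\<leftarrow>xs. fH \<kappa> Hs x) * F xs) {xs. length xs = n}"

definition hpd_mass :: "real \<Rightarrow> real measure \<Rightarrow> real \<Rightarrow> real" where
  "hpd_mass \<kappa> H k = (\<Sum>x. LINT \<theta>:{0..}|lborel.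
      indicat_real {\<theta>. post \<kappa> H \<theta> x \<ge> k} \<theta> * pois \<theta> x * gH \<kappa> H \<theta>)"

definition khat :: "real \<Rightarrow> real measure \<Rightarrow> real \<Rightarrow> real" where
  "khat \<kappa> H \<beta> = Sup {k. k \<ge> 0 \<and> hpd_mass \<kappa> H k \<ge> 1 - \<beta>}"

definition Ihat :: "real \<Rightarrow> real measure \<Rightarrow> real \<Rightarrow> nat \<Rightarrow> real set" where
  "Ihat \<kappa> H \<beta> x = {\<theta>. \<theta> \<ge> 0 \<and> post \<kappa> H \<theta> x \<ge> khat \<kappa> H \<beta>}"

definition coverage :: "real \<Rightarrow> real measure \<Rightarrow> real measure \<Rightarrow> real \<Rightarrow> real" where
  "coverage \<kappa> Hs H \<beta> = (\<Sum>x. LINT \<theta>:{0..}|lborel.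
      indicat_real (Ihat \<kappa> H \<beta> x) \<theta> * pois \<theta> x * gH \<kappa> Hs \<theta>)"

definition rate :: "real \<Rightarrow> real \<Rightarrow> nat \<Rightarrow> real" where
  "rate \<kappa> \<alpha> n = real n powr (- \<alpha>) * ln (real n) powr (pos_part (1 - \<kappa>) + \<alpha>)"

end

theory Submission
  imports Defs "HOL-Complex_Analysis.Complex_Analysis" "HOL-Real_Asymp.Real_Asymp"
begin


lemma gamma_nn_scaled:
  fixes s c :: real
  assumes s: "s > 0" and c: "c > 0"
  shows "(\<integral>\<^sup>+ t. ennreal (indicator {0..} t * t powr (s - 1) * exp (- c * t)) \<partial>lborel)
         = ennreal (Gamma s / c powr s)"
proof -
  define I where "I = (\<integral>\<^sup>+ t. ennreal (indicator {0..} t * t powr (s - 1) * exp (- c * t)) \<partial>lborel)"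
  have "ennreal (Gamma s) = (\<integral>\<^sup>+ t. ennreal (indicator {0..} t * t powr (s - 1) / exp t) \<partial>lborel)"
    using Gamma_conv_nn_integral_real[OF s] by simp
  also have "\<dots> = ennreal c * (\<integral>\<^sup>+ t. ennreal (indicator {0..} (0 + c * t) * (0 + c * t) powr (s - 1) / exp (0 + c * t)) \<partial>lborel)"
    using nn_integral_real_affine[of "\<lambda>t. ennreal (indicator {0..} t * t powr (s - 1) / exp t)" c 0] c
    by simp
  also have "(\<lambda>t. ennreal (indicator {0..} (0 + c * t) * (0 + c * t) powr (s - 1) / exp (0 + c * t)))
       = (\<lambda>t. ennreal (c powr (s - 1)) * ennreal (indicator {0..} t * t powr (s - 1) * exp (- c * t)))"
  proof
    fix t
    have r: "indicator {0..} (0 + c * t) * (0 + c * t) powr (s - 1) / exp (0 + c * t)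
        = c powr (s - 1) * (indicator {0..} t * t powr (s - 1) * exp (- c * t))"
    proof (cases "t \<ge> 0")
      case True
      then have "(c * t) powr (s - 1) = c powr (s - 1) * t powr (s - 1)"
        using c by (simp add: powr_mult)
      moreover have "1 / exp (c * t) = exp (- c * t)" by (simp add: exp_minus inverse_eq_divide)
      ultimately show ?thesis using True c by (simp add: divide_inverse exp_minus)
    next
      case False
      then have "\<not> (0 \<le> c * t)" using c by (simp add: zero_le_mult_iff)
      then show ?thesis using False by simp
    qed
    show "ennreal (indicator {0..} (0 + c * t) * (0 + c * t) powr (s - 1) / exp (0 + c * t))
       = ennreal (c powr (s - 1)) * ennreal (indicator {0..} t * t powr (s - 1) * exp (- c * t))"
      unfolding r by (rule ennreal_mult) auto
  qed
  also have "(\<integral>\<^sup>+ t. ennreal (c powr (s - 1)) * ennreal (indicator {0..} t * t powr (s - 1) * exp (- c * t)) \<partial>lborel)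
     = ennreal (c powr (s - 1)) * I"
    unfolding I_def by (rule nn_integral_cmult) simp
  finally have eq0: "ennreal (Gamma s) = ennreal c * (ennreal (c powr (s - 1)) * I)" .
  have "ennreal c * ennreal (c powr (s - 1)) = ennreal (c * c powr (s - 1))"
    using c by (simp add: ennreal_mult)
  also have "c * c powr (s - 1) = c powr s"
    using c by (simp add: powr_diff)
  finally have eq: "ennreal (Gamma s) = ennreal (c powr s) * I"
    using eq0 by (metis mult.assoc)
  have cp: "c powr s > 0" using c by simp
  have "ennreal (Gamma s / c powr s) = ennreal (Gamma s) / ennreal (c powr s)"
    using cp Gamma_real_pos[OF s] by (simp add: divide_ennreal)
  also have "\<dots> = I"
    unfolding eq using cp
    by (metis ennreal_eq_0_iff ennreal_mult_divide_eq ennreal_neq_top less_le_not_le mult.commute)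
  finally show ?thesis unfolding I_def ..
qed

lemma AE_bound_integrable:
  fixes f :: "real \<Rightarrow> real"
  assumes "prob_space H" "f \<in> borel_measurable H" "AE x in H. \<bar>f x\<bar> \<le> B"
  shows "integrable H f"
  using finite_measure.integrable_const_bound[OF prob_space.finite_measure[OF assms(1)], of f B] assms(2,3)
  by simp

lemma integral_pos_AE:
  fixes f :: "real \<Rightarrow> real"
  assumes P: "prob_space H" and f: "integrable H f" and pos: "AE x in H. 0 < f x"
  shows "integral\<^sup>L H f > 0"
proof -
  have nn: "AE x in H. 0 \<le> f x" using pos by eventually_elim auto
  have ge: "integral\<^sup>L H f \<ge> 0" using integral_nonneg_AE[OF nn] .
  have "integral\<^sup>L H f \<noteq> 0"
  proof
    assume "integral\<^sup>L H f = 0"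
    then have "AE x in H. f x = 0" using integral_nonneg_eq_0_iff_AE[OF f nn] by simp
    with pos have "AE x in H. False" by eventually_elim auto
    then show False using prob_space.AE_False[OF P] by simp
  qed
  with ge show ?thesis by simp
qed

locale mixH =
  fixes \<kappa> L U :: real and H :: "real measure"
  assumes kpos: "\<kappa> > 0" and Lpos: "0 < L" and LU: "L \<le> U" and Hin: "H \<in> probs_on L U"
begin

lemma P: "prob_space H" using Hin by (simp add: probs_on_def)
lemma Hsets: "sets H = sets borel" using Hin by (simp add: probs_on_def)
lemma Hspace: "space H = UNIV" using sets_eq_imp_space_eq[OF Hsets] by simp

lemma AE_LU: "AE lam in H. L \<le> lam \<and> lam \<le> U"
proof -
  have "emeasure H {L..U} = 1" using Hin by (simp add: probs_on_def)
  then have "measure H {L..U} = 1" by (simp add: measure_def)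
  then have "AE lam in H. lam \<in> {L..U}" using prob_space.AE_prob_1[OF P] by blast
  then show ?thesis by simp
qed

lemma meas_H: "f \<in> borel_measurable borel \<Longrightarrow> f \<in> borel_measurable H"
  using measurable_cong_sets[OF Hsets refl, of borel] by blast


definition Mf :: "real \<Rightarrow> real" where
  "Mf \<theta> = (\<integral>lam. lam powr \<kappa> * exp (- lam * \<theta>) \<partial>H)"

lemma gH_Mf: "gH \<kappa> H \<theta> = \<theta> powr (\<kappa> - 1) / Gamma \<kappa> * Mf \<theta>"
proof -
  have "gH \<kappa> H \<theta> = (\<integral>lam. (\<theta> powr (\<kappa> - 1) / Gamma \<kappa>) * (lam powr \<kappa> * exp (- lam * \<theta>)) \<partial>H)"
    unfolding gH_def by (rule Bochner_Integration.integral_cong) (auto simp: field_simps)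
  also have "\<dots> = \<theta> powr (\<kappa> - 1) / Gamma \<kappa> * Mf \<theta>"
    unfolding Mf_def by simp
  finally show ?thesis .
qed

lemma Mf_integrable: "integrable H (\<lambda>lam. lam powr \<kappa> * exp (- lam * \<theta>))"
proof (rule AE_bound_integrable[OF P, where B="U powr \<kappa> * exp (U * \<bar>\<theta>\<bar>)"])
  show "(\<lambda>lam. lam powr \<kappa> * exp (- lam * \<theta>)) \<in> borel_measurable H"
    by (rule meas_H) measurable
  show "AE lam in H. \<bar>lam powr \<kappa> * exp (- lam * \<theta>)\<bar> \<le> U powr \<kappa> * exp (U * \<bar>\<theta>\<bar>)"
    using AE_LU
  proof eventually_elim
    case (elim lam)
    have l0: "lam > 0" using elim Lpos by simp
    have "\<bar>lam powr \<kappa> * exp (- lam * \<theta>)\<bar> = lam powr \<kappa> * exp (- lam * \<theta>)" by simp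
    also have "\<dots> \<le> U powr \<kappa> * exp (U * \<bar>\<theta>\<bar>)"
    proof (rule mult_mono)
      show "lam powr \<kappa> \<le> U powr \<kappa>" using elim l0 kpos by (intro powr_mono2) auto
      have "- lam * \<theta> \<le> lam * \<bar>\<theta>\<bar>" using l0 by (simp add: abs_if)
      also have "\<dots> \<le> U * \<bar>\<theta>\<bar>" using elim by (intro mult_right_mono) auto
      finally show "exp (- lam * \<theta>) \<le> exp (U * \<bar>\<theta>\<bar>)" by simp
    qed auto
    finally show ?case .
  qed
qed

lemma Mf_pos: "Mf \<theta> > 0"
  unfolding Mf_def
proof (rule integral_pos_AE[OF P Mf_integrable])
  show "AE x in H. 0 < x powr \<kappa> * exp (- x * \<theta>)"
    using AE_LU by eventually_elim (use Lpos in auto)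
qed

lemma Mf_le: assumes "\<theta> \<ge> 0" shows "Mf \<theta> \<le> U powr \<kappa>"
proof -
  have "Mf \<theta> \<le> (\<integral>lam. U powr \<kappa> \<partial>H)"
    unfolding Mf_def
  proof (rule integral_mono_AE[OF Mf_integrable])
    show "integrable H (\<lambda>lam. U powr \<kappa>)"
      using finite_measure.integrable_const[OF prob_space.finite_measure[OF P]] by blast
    show "AE lam in H. lam powr \<kappa> * exp (- lam * \<theta>) \<le> U powr \<kappa>"
      using AE_LU
    proof eventually_elim
      case (elim lam)
      have l0: "lam > 0" using elim Lpos by simp
      have "lam powr \<kappa> * exp (- lam * \<theta>) \<le> U powr \<kappa> * 1"
        apply (rule mult_mono)
        using elim l0 kpos assms by (auto intro!: powr_mono2)
      then show ?case by simp
    qed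
  qed
  also have "\<dots> = U powr \<kappa>" using prob_space.prob_space[OF P] by simp
  finally show ?thesis .
qed

lemma gH_nonneg: "gH \<kappa> H \<theta> \<ge> 0"
  unfolding gH_Mf using Mf_pos[of \<theta>] Gamma_real_pos[OF kpos] by simp


end


lemma SI:
  fixes F :: "nat \<Rightarrow> real \<Rightarrow> real"
  assumes Fm: "\<And>x. F x \<in> borel_measurable lborel" and Fn: "\<And>x \<theta>. 0 \<le> F x \<theta>"
    and Fs: "\<And>\<theta>. (\<lambda>x. F x \<theta>) sums S \<theta>" and Si: "integrable lborel S"
  shows SI_int: "\<And>x. integrable lborel (F x)"
    and SI_sums: "(\<lambda>x. \<integral>\<theta>. F x \<theta> \<partial>lborel) sums (\<integral>\<theta>. S \<theta> \<partial>lborel)"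
proof -
  have Sn: "0 \<le> S \<theta>" for \<theta>
    using Fs[of \<theta>] Fn by (metis sums_unique suminf_nonneg sums_summable)
  have le: "F x \<theta> \<le> S \<theta>" for x \<theta>
  proof -
    have "sum (\<lambda>x. F x \<theta>) {x} \<le> (\<Sum>x. F x \<theta>)"
      by (rule sum_le_suminf) (use Fs[of \<theta>] Fn in \<open>auto simp: sums_iff\<close>)
    then show ?thesis using Fs[of \<theta>] by (simp add: sums_iff)
  qed
  show int: "integrable lborel (F x)" for x
    by (rule Bochner_Integration.integrable_bound[OF Si Fm]) (use le Fn Sn in auto)
  have "(\<Sum>x. ennreal (\<integral>\<theta>. F x \<theta> \<partial>lborel)) = (\<Sum>x. (\<integral>\<^sup>+\<theta>. ennreal (F x \<theta>) \<partial>lborel))"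
    by (rule suminf_cong) (rule nn_integral_eq_integral[OF int, symmetric], simp add: Fn)
  also have "\<dots> = (\<integral>\<^sup>+\<theta>. (\<Sum>x. ennreal (F x \<theta>)) \<partial>lborel)"
    by (rule nn_integral_suminf[symmetric]) (use Fm in simp)
  also have "\<dots> = (\<integral>\<^sup>+\<theta>. ennreal (S \<theta>) \<partial>lborel)"
    by (rule nn_integral_cong) (use Fs Fn in \<open>auto simp: suminf_ennreal2 sums_iff\<close>)
  also have "\<dots> = ennreal (\<integral>\<theta>. S \<theta> \<partial>lborel)"
    by (rule nn_integral_eq_integral[OF Si]) (simp add: Sn)
  finally have E: "(\<Sum>x. ennreal (\<integral>\<theta>. F x \<theta> \<partial>lborel)) = ennreal (\<integral>\<theta>. S \<theta> \<partial>lborel)" .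
  have In: "0 \<le> (\<integral>\<theta>. F x \<theta> \<partial>lborel)" for x using Fn by simp
  have sm: "summable (\<lambda>x. \<integral>\<theta>. F x \<theta> \<partial>lborel)"
    by (rule summable_suminf_not_top) (use In E in auto)
  have "ennreal (\<Sum>x. \<integral>\<theta>. F x \<theta> \<partial>lborel) = ennreal (\<integral>\<theta>. S \<theta> \<partial>lborel)"
    using E suminf_ennreal2[OF In sm] by simp
  then have "(\<Sum>x. \<integral>\<theta>. F x \<theta> \<partial>lborel) = (\<integral>\<theta>. S \<theta> \<partial>lborel)"
    using In Sn by (subst (asm) ennreal_inj) (auto intro: suminf_nonneg sm)
  then show "(\<lambda>x. \<integral>\<theta>. F x \<theta> \<partial>lborel) sums (\<integral>\<theta>. S \<theta> \<partial>lborel)"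
    using sm by (simp add: sums_iff)
qed

lemma pois_sums: assumes "\<theta> \<ge> 0" shows "(\<lambda>x. pois \<theta> x) sums 1"
proof -
  have "(\<lambda>n. \<theta> ^ n /\<^sub>R fact n) sums exp \<theta>" by (rule exp_converges)
  then have "(\<lambda>n. exp (- \<theta>) * (\<theta> ^ n /\<^sub>R fact n)) sums (exp (- \<theta>) * exp \<theta>)" by (rule sums_mult)
  then show ?thesis by (simp add: pois_def exp_minus divide_inverse mult_ac)
qed

lemma pois_nonneg: "\<theta> \<ge> 0 \<Longrightarrow> pois \<theta> x \<ge> 0"
  by (simp add: pois_def)

context mixH begin

definition kern :: "real \<Rightarrow> real \<Rightarrow> real" where
  "kern lam \<theta> = lam powr \<kappa> / Gamma \<kappa> * \<theta> powr (\<kappa> - 1) * exp (- lam * \<theta>)"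

lemma kern_nonneg: "kern lam \<theta> \<ge> 0"
  unfolding kern_def using Gamma_real_pos[OF kpos] by simp

lemma kern_integrable: "integrable H (\<lambda>lam. kern lam \<theta>)"
proof -
  have "integrable H (\<lambda>lam. (\<theta> powr (\<kappa> - 1) / Gamma \<kappa>) * (lam powr \<kappa> * exp (- lam * \<theta>)))"
    using Mf_integrable by (rule integrable_mult_right)
  then show ?thesis by (rule Bochner_Integration.integrable_cong[THEN iffD1, rotated -1]) (auto simp: kern_def)
qed

lemma gH_kern: "gH \<kappa> H \<theta> = (\<integral>lam. kern lam \<theta> \<partial>H)"
  unfolding gH_def kern_def ..

lemma kern_meas: "(\<lambda>(lam, \<theta>). kern lam \<theta>) \<in> borel_measurable (H \<Otimes>\<^sub>M lborel)"
proof -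
  have "(\<lambda>(lam, \<theta>). kern lam \<theta>) \<in> borel_measurable (borel \<Otimes>\<^sub>M lborel)"
    unfolding kern_def by measurable
  then show ?thesis
    using measurable_cong_sets[OF sets_pair_measure_cong[OF Hsets refl] refl] by blast
qed

lemma PSF: "pair_sigma_finite H lborel"
proof -
  have "sigma_finite_measure H"
    using P prob_space.finite_measure finite_measure.sigma_finite_measure by blast
  then show ?thesis
    by (simp add: pair_sigma_finite.intro lborel.sigma_finite_measure_axioms)
qed

lemma Tgen:
  assumes phim[measurable]: "\<phi> \<in> borel_measurable borel" and phin: "\<And>\<theta>. \<theta> \<ge> 0 \<Longrightarrow> \<phi> \<theta> \<ge> 0"
  shows "(\<integral>\<^sup>+\<theta>. ennreal (indicator {0..} \<theta> * \<phi> \<theta> * gH \<kappa> H \<theta>) \<partial>lborel)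
       = (\<integral>\<^sup>+lam. (\<integral>\<^sup>+\<theta>. ennreal (indicator {0..} \<theta> * \<phi> \<theta> * kern lam \<theta>) \<partial>lborel) \<partial>H)"
proof -
  have pt: "ennreal (indicator {0..} \<theta> * \<phi> \<theta> * gH \<kappa> H \<theta>)
      = (\<integral>\<^sup>+lam. ennreal (indicator {0..} \<theta> * \<phi> \<theta> * kern lam \<theta>) \<partial>H)" for \<theta>
  proof (cases "\<theta> \<ge> 0")
    case True
    have int: "integrable H (\<lambda>lam. \<phi> \<theta> * kern lam \<theta>)"
      using kern_integrable by (rule integrable_mult_right)
    have "(\<integral>\<^sup>+lam. ennreal (indicator {0..} \<theta> * \<phi> \<theta> * kern lam \<theta>) \<partial>H)
        = (\<integral>\<^sup>+lam. ennreal (\<phi> \<theta> * kern lam \<theta>) \<partial>H)" using True by simp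
    also have "\<dots> = ennreal (\<integral>lam. \<phi> \<theta> * kern lam \<theta> \<partial>H)"
      using int by (rule nn_integral_eq_integral) (use phin[OF True] kern_nonneg in simp)
    also have "(\<integral>lam. \<phi> \<theta> * kern lam \<theta> \<partial>H) = indicator {0..} \<theta> * \<phi> \<theta> * gH \<kappa> H \<theta>"
      using True by (simp add: gH_kern)
    finally show ?thesis ..
  next
    case False
    then show ?thesis by simp
  qed
  have "(\<integral>\<^sup>+\<theta>. ennreal (indicator {0..} \<theta> * \<phi> \<theta> * gH \<kappa> H \<theta>) \<partial>lborel)
      = (\<integral>\<^sup>+\<theta>. (\<integral>\<^sup>+lam. ennreal (indicator {0..} \<theta> * \<phi> \<theta> * kern lam \<theta>) \<partial>H) \<partial>lborel)"
    by (simp add: pt)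
  also have "\<dots> = (\<integral>\<^sup>+lam. (\<integral>\<^sup>+\<theta>. ennreal (indicator {0..} \<theta> * \<phi> \<theta> * kern lam \<theta>) \<partial>lborel) \<partial>H)"
  proof -
    have m: "(\<lambda>(lam, \<theta>). ennreal (indicator {0..} \<theta> * \<phi> \<theta> * kern lam \<theta>)) \<in> borel_measurable (H \<Otimes>\<^sub>M lborel)"
    proof -
      have [measurable]: "(\<lambda>(lam, \<theta>). kern lam \<theta>) \<in> borel_measurable (H \<Otimes>\<^sub>M lborel)" by (rule kern_meas)
      show ?thesis by measurable
    qed
    show ?thesis
      using pair_sigma_finite.Fubini[OF PSF m] by simp
  qed
  finally show ?thesis .
qed

lemma AE_pos: "AE lam in H. lam > 0"
  using AE_LU by eventually_elim (use Lpos in auto)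

lemma T1: "(\<integral>\<^sup>+\<theta>. ennreal (indicator {0..} \<theta> * gH \<kappa> H \<theta>) \<partial>lborel) = 1"
proof -
  have "(\<integral>\<^sup>+\<theta>. ennreal (indicator {0..} \<theta> * gH \<kappa> H \<theta>) \<partial>lborel)
     = (\<integral>\<^sup>+\<theta>. ennreal (indicator {0..} \<theta> * (\<lambda>_. 1) \<theta> * gH \<kappa> H \<theta>) \<partial>lborel)" by simp
  also have "\<dots> = (\<integral>\<^sup>+lam. (\<integral>\<^sup>+\<theta>. ennreal (indicator {0..} \<theta> * (\<lambda>_. 1) \<theta> * kern lam \<theta>) \<partial>lborel) \<partial>H)"
    by (rule Tgen) auto
  also have "\<dots> = (\<integral>\<^sup>+lam. 1 \<partial>H)"
  proof (rule nn_integral_cong_AE)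
    show "AE lam in H. (\<integral>\<^sup>+\<theta>. ennreal (indicator {0..} \<theta> * (\<lambda>_. 1) \<theta> * kern lam \<theta>) \<partial>lborel) = 1"
      using AE_pos
    proof eventually_elim
      case (elim lam)
      have G: "Gamma \<kappa> > 0" using Gamma_real_pos[OF kpos] .
      have "(\<integral>\<^sup>+\<theta>. ennreal (indicator {0..} \<theta> * (\<lambda>_. 1) \<theta> * kern lam \<theta>) \<partial>lborel)
         = (\<integral>\<^sup>+\<theta>. ennreal (lam powr \<kappa> / Gamma \<kappa>) * ennreal (indicator {0..} \<theta> * \<theta> powr (\<kappa> - 1) * exp (- lam * \<theta>)) \<partial>lborel)"
      proof (rule nn_integral_cong)
        fix \<theta>
        have "indicator {0..} \<theta> * (\<lambda>_. 1) \<theta> * kern lam \<theta> = (lam powr \<kappa> / Gamma \<kappa>) * (indicator {0..} \<theta> * \<theta> powr (\<kappa> - 1) * exp (- lam * \<theta>))"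
          by (simp add: kern_def)
        then show "ennreal (indicator {0..} \<theta> * (\<lambda>_. 1) \<theta> * kern lam \<theta>) = ennreal (lam powr \<kappa> / Gamma \<kappa>) * ennreal (indicator {0..} \<theta> * \<theta> powr (\<kappa> - 1) * exp (- lam * \<theta>))"
          unfolding \<open>indicator {0..} \<theta> * (\<lambda>_. 1) \<theta> * kern lam \<theta> = _\<close> using G by (intro ennreal_mult) auto
      qed
      also have "\<dots> = ennreal (lam powr \<kappa> / Gamma \<kappa>) * (\<integral>\<^sup>+\<theta>. ennreal (indicator {0..} \<theta> * \<theta> powr (\<kappa> - 1) * exp (- lam * \<theta>)) \<partial>lborel)"
        by (rule nn_integral_cmult) simp
      also have "\<dots> = ennreal (lam powr \<kappa> / Gamma \<kappa>) * ennreal (Gamma \<kappa> / lam powr \<kappa>)"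
        using gamma_nn_scaled[OF kpos elim] by simp
      also have "\<dots> = ennreal (lam powr \<kappa> / Gamma \<kappa> * (Gamma \<kappa> / lam powr \<kappa>))"
        by (rule ennreal_mult[symmetric]) (use G elim in auto)
      also have "lam powr \<kappa> / Gamma \<kappa> * (Gamma \<kappa> / lam powr \<kappa>) = 1"
        using G elim by simp
      finally show ?case by simp
    qed
  qed
  also have "\<dots> = 1" using prob_space.emeasure_space_1[OF P] by simp
  finally show ?thesis .
qed

definition fint :: "nat \<Rightarrow> real \<Rightarrow> real" where
  "fint x lam = Gamma (real x + \<kappa>) / (fact x * Gamma \<kappa>)
        * (1 / (lam + 1)) ^ x * (lam / (lam + 1)) powr \<kappa>"

lemma fH_fint: "fH \<kappa> H x = (\<integral>lam. fint x lam \<partial>H)"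
  unfolding fH_def fint_def ..

lemma pois_kern:
  assumes "lam > 0"
  shows "indicator {0..} \<theta> * pois \<theta> x * kern lam \<theta>
     = lam powr \<kappa> / (fact x * Gamma \<kappa>) * (indicator {0..} \<theta> * \<theta> powr (real x + \<kappa> - 1) * exp (- (lam + 1) * \<theta>))"
proof (cases "\<theta> > 0")
  case True
  have e: "exp (- \<theta>) * exp (- lam * \<theta>) = exp (- (lam + 1) * \<theta>)"
    by (simp add: exp_add[symmetric] algebra_simps)
  have p: "\<theta> ^ x * \<theta> powr (\<kappa> - 1) = \<theta> powr (real x + \<kappa> - 1)"
    using True by (simp add: powr_realpow[symmetric] powr_add[symmetric] add_diff_eq)
  have "indicator {0..} \<theta> * pois \<theta> x * kern lam \<theta>
      = lam powr \<kappa> / (fact x * Gamma \<kappa>) * ((\<theta> ^ x * \<theta> powr (\<kappa> - 1)) * (exp (- \<theta>) * exp (- lam * \<theta>)))"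
    using True by (simp add: pois_def kern_def)
  also have "\<dots> = lam powr \<kappa> / (fact x * Gamma \<kappa>) * (indicator {0..} \<theta> * \<theta> powr (real x + \<kappa> - 1) * exp (- (lam + 1) * \<theta>))"
    unfolding e p using True by simp
  finally show ?thesis .
next
  case False
  then show ?thesis by (cases "\<theta> = 0") (auto simp: kern_def)
qed

lemma fint_alg:
  assumes "lam > 0"
  shows "lam powr \<kappa> / (fact x * Gamma \<kappa>) * (Gamma (real x + \<kappa>) / (lam + 1) powr (real x + \<kappa>)) = fint x lam"
proof -
  have a: "(lam + 1) powr (real x + \<kappa>) = (lam + 1) ^ x * (lam + 1) powr \<kappa>"
    using assms by (simp add: powr_add powr_realpow)
  have b: "(lam / (lam + 1)) powr \<kappa> = lam powr \<kappa> / (lam + 1) powr \<kappa>"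
    using assms by (simp add: powr_divide)
  have c: "(1 / (lam + 1)) ^ x = 1 / (lam + 1) ^ x" by (simp add: power_one_over)
  show ?thesis unfolding fint_def a b c using assms by (simp add: field_simps)
qed

lemma fint_meas: "fint x \<in> borel_measurable H"
  by (rule meas_H) (unfold fint_def, measurable)

lemma fint_bound:
  assumes "lam > 0"
  shows "0 < fint x lam" "fint x lam \<le> Gamma (real x + \<kappa>) / (fact x * Gamma \<kappa>)"
proof -
  have G1: "Gamma (real x + \<kappa>) > 0" using kpos by (intro Gamma_real_pos) simp
  have G2: "Gamma \<kappa> > 0" using Gamma_real_pos[OF kpos] .
  show "0 < fint x lam" unfolding fint_def using assms G1 G2 by simp
  have "(1 / (lam + 1)) ^ x \<le> 1" using assms by (intro power_le_one) auto
  moreover have "(lam / (lam + 1)) powr \<kappa> \<le> 1 powr \<kappa>" using assms kpos by (intro powr_mono2) auto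
  ultimately have "(1 / (lam + 1)) ^ x * (lam / (lam + 1)) powr \<kappa> \<le> 1 * 1"
    by (intro mult_mono) auto
  then show "fint x lam \<le> Gamma (real x + \<kappa>) / (fact x * Gamma \<kappa>)"
    unfolding fint_def using G1 G2 mult_left_mono[of "(1 / (lam + 1)) ^ x * (lam / (lam + 1)) powr \<kappa>" 1 "Gamma (real x + \<kappa>) / (fact x * Gamma \<kappa>)"]
    by (simp add: mult.assoc)
qed

lemma fint_integrable: "integrable H (fint x)"
proof (rule AE_bound_integrable[OF P fint_meas])
  show "AE lam in H. \<bar>fint x lam\<bar> \<le> Gamma (real x + \<kappa>) / (fact x * Gamma \<kappa>)"
    using AE_pos by eventually_elim (use fint_bound in \<open>auto simp: abs_of_pos\<close>)
qed

lemma fH_pos: "fH \<kappa> H x > 0"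
  unfolding fH_fint
proof (rule integral_pos_AE[OF P fint_integrable])
  show "AE lam in H. 0 < fint x lam" using AE_pos by eventually_elim (rule fint_bound)
qed

lemma T2: "(\<integral>\<^sup>+\<theta>. ennreal (indicator {0..} \<theta> * pois \<theta> x * gH \<kappa> H \<theta>) \<partial>lborel) = ennreal (fH \<kappa> H x)"
proof -
  have "(\<integral>\<^sup>+\<theta>. ennreal (indicator {0..} \<theta> * pois \<theta> x * gH \<kappa> H \<theta>) \<partial>lborel)
     = (\<integral>\<^sup>+lam. (\<integral>\<^sup>+\<theta>. ennreal (indicator {0..} \<theta> * pois \<theta> x * kern lam \<theta>) \<partial>lborel) \<partial>H)"
    by (rule Tgen[where \<phi>="\<lambda>\<theta>. pois \<theta> x"]) (auto simp: pois_def)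
  also have "\<dots> = (\<integral>\<^sup>+lam. ennreal (fint x lam) \<partial>H)"
  proof (rule nn_integral_cong_AE)
    show "AE lam in H. (\<integral>\<^sup>+\<theta>. ennreal (indicator {0..} \<theta> * pois \<theta> x * kern lam \<theta>) \<partial>lborel) = ennreal (fint x lam)"
      using AE_pos
    proof eventually_elim
      case (elim lam)
      have G: "Gamma \<kappa> > 0" using Gamma_real_pos[OF kpos] .
      have c0: "lam powr \<kappa> / (fact x * Gamma \<kappa>) \<ge> 0" using G by simp
      have s: "real x + \<kappa> > 0" using kpos by simp
      have "(\<integral>\<^sup>+\<theta>. ennreal (indicator {0..} \<theta> * pois \<theta> x * kern lam \<theta>) \<partial>lborel)
         = (\<integral>\<^sup>+\<theta>. ennreal (lam powr \<kappa> / (fact x * Gamma \<kappa>)) * ennreal (indicator {0..} \<theta> * \<theta> powr (real x + \<kappa> - 1) * exp (- (lam + 1) * \<theta>)) \<partial>lborel)"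
      proof (rule nn_integral_cong)
        fix \<theta>
        show "ennreal (indicator {0..} \<theta> * pois \<theta> x * kern lam \<theta>) = ennreal (lam powr \<kappa> / (fact x * Gamma \<kappa>)) * ennreal (indicator {0..} \<theta> * \<theta> powr (real x + \<kappa> - 1) * exp (- (lam + 1) * \<theta>))"
          unfolding pois_kern[OF elim] using c0 by (intro ennreal_mult) auto
      qed
      also have "\<dots> = ennreal (lam powr \<kappa> / (fact x * Gamma \<kappa>)) * (\<integral>\<^sup>+\<theta>. ennreal (indicator {0..} \<theta> * \<theta> powr (real x + \<kappa> - 1) * exp (- (lam + 1) * \<theta>)) \<partial>lborel)"
        by (rule nn_integral_cmult) simp
      also have "\<dots> = ennreal (lam powr \<kappa> / (fact x * Gamma \<kappa>)) * ennreal (Gamma (real x + \<kappa>) / (lam + 1) powr (real x + \<kappa>))"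
        using gamma_nn_scaled[OF s, of "lam + 1"] elim by simp
      also have "\<dots> = ennreal (lam powr \<kappa> / (fact x * Gamma \<kappa>) * (Gamma (real x + \<kappa>) / (lam + 1) powr (real x + \<kappa>)))"
        by (rule ennreal_mult[symmetric]) (use c0 s elim in \<open>auto intro!: Gamma_real_pos\<close>)
      also have "\<dots> = ennreal (fint x lam)" using fint_alg[OF elim] by simp
      finally show ?case .
    qed
  qed
  also have "\<dots> = ennreal (\<integral>lam. fint x lam \<partial>H)"
  proof (rule nn_integral_eq_integral[OF fint_integrable])
    show "AE lam in H. 0 \<le> fint x lam" using AE_pos by eventually_elim (simp add: fint_bound less_imp_le)
  qed
  finally show ?thesis by (simp add: fH_fint)
qed

lemma Mf_meas[measurable]: "Mf \<in> borel_measurable borel"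
proof -
  have "(\<lambda>(\<theta>, lam). lam powr \<kappa> * exp (- lam * \<theta>)) \<in> borel_measurable (borel \<Otimes>\<^sub>M borel)"
    by measurable
  then have "(\<lambda>(\<theta>, lam). lam powr \<kappa> * exp (- lam * \<theta>)) \<in> borel_measurable (borel \<Otimes>\<^sub>M H)"
    using measurable_cong_sets[OF sets_pair_measure_cong[OF refl Hsets] refl] by blast
  moreover have "sigma_finite_measure H"
    using P prob_space.finite_measure finite_measure.sigma_finite_measure by blast
  moreover have "Mf = (\<lambda>\<theta>. \<integral>lam. (\<lambda>\<theta> lam. lam powr \<kappa> * exp (- lam * \<theta>)) \<theta> lam \<partial>H)"
    by (rule ext) (simp add: Mf_def)
  ultimately show ?thesis
    using sigma_finite_measure.borel_measurable_lebesgue_integral[of H "\<lambda>\<theta> lam. lam powr \<kappa> * exp (- lam * \<theta>)" borel]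
    by simp
qed

lemma gH_meas[measurable]: "gH \<kappa> H \<in> borel_measurable borel"
proof -
  have "gH \<kappa> H = (\<lambda>\<theta>. \<theta> powr (\<kappa> - 1) / Gamma \<kappa> * Mf \<theta>)" by (rule ext) (rule gH_Mf)
  then show ?thesis by simp
qed

lemma g_int: "integrable lborel (\<lambda>\<theta>. indicator {0..} \<theta> * gH \<kappa> H \<theta>)"
  and g_int1: "(\<integral>\<theta>. indicator {0..} \<theta> * gH \<kappa> H \<theta> \<partial>lborel) = 1"
proof -
  have "(\<integral>\<^sup>+\<theta>. ennreal (indicator {0..} \<theta> * gH \<kappa> H \<theta>) \<partial>lborel) = ennreal 1"
    using T1 by simp
  then have "integrable lborel (\<lambda>\<theta>. indicator {0..} \<theta> * gH \<kappa> H \<theta>) \<and> (\<integral>\<theta>. indicator {0..} \<theta> * gH \<kappa> H \<theta> \<partial>lborel) = 1"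
    by (subst (asm) nn_integral_eq_integrable) (auto simp: gH_nonneg)
  then show "integrable lborel (\<lambda>\<theta>. indicator {0..} \<theta> * gH \<kappa> H \<theta>)"
    "(\<integral>\<theta>. indicator {0..} \<theta> * gH \<kappa> H \<theta> \<partial>lborel) = 1" by auto
qed

definition wf :: "nat \<Rightarrow> real \<Rightarrow> real" where
  "wf x \<theta> = indicator {0..} \<theta> * pois \<theta> x * gH \<kappa> H \<theta>"

lemma wf_meas[measurable]: "wf x \<in> borel_measurable borel"
  unfolding wf_def pois_def by measurable

lemma wf_nonneg: "wf x \<theta> \<ge> 0"
  unfolding wf_def by (cases "\<theta> \<ge> 0") (auto simp: pois_nonneg gH_nonneg)

lemma wf_sums: "(\<lambda>x. wf x \<theta>) sums (indicator {0..} \<theta> * gH \<kappa> H \<theta>)"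
proof (cases "\<theta> \<ge> 0")
  case True
  have "(\<lambda>x. (indicator {0..} \<theta> * gH \<kappa> H \<theta>) * pois \<theta> x) sums ((indicator {0..} \<theta> * gH \<kappa> H \<theta>) * 1)"
    by (rule sums_mult[OF pois_sums[OF True]])
  then show ?thesis by (simp add: wf_def mult_ac)
next
  case False
  then show ?thesis by (simp add: wf_def)
qed

lemma wf_int: "integrable lborel (wf x)"
  by (rule SI_int[OF _ wf_nonneg wf_sums g_int]) simp

lemma wf_fH: "(\<integral>\<theta>. wf x \<theta> \<partial>lborel) = fH \<kappa> H x"
proof -
  have "(\<integral>\<^sup>+\<theta>. ennreal (wf x \<theta>) \<partial>lborel) = ennreal (fH \<kappa> H x)"
    using T2 by (simp add: wf_def)
  then show ?thesis
    by (subst (asm) nn_integral_eq_integrable) (auto simp: wf_nonneg less_imp_le[OF fH_pos])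
qed

lemma fH_sums: "(\<lambda>x. fH \<kappa> H x) sums 1"
  using SI_sums[OF _ wf_nonneg wf_sums g_int] g_int1 by (simp add: wf_fH)

definition N :: "(nat \<times> real) measure" where
  "N = density (count_space UNIV \<Otimes>\<^sub>M lborel) (\<lambda>z. ennreal (wf (fst z) (snd z)))"

lemma wf_meas2[measurable]: "(\<lambda>z. wf (fst z) (snd z)) \<in> borel_measurable (count_space UNIV \<Otimes>\<^sub>M lborel)"
proof -
  have "(\<lambda>z. (\<lambda>i z. wf i (snd z)) (fst z) z) \<in> borel_measurable (count_space UNIV \<Otimes>\<^sub>M lborel)"
    by (rule measurable_compose_countable'[where I=UNIV]) auto
  then show ?thesis by simp
qed

lemma TRANS:
  assumes A: "A \<in> sets (count_space UNIV \<Otimes>\<^sub>M lborel)"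
  shows "emeasure N A = ennreal (\<Sum>x. \<integral>\<theta>. indicator A (x, \<theta>) * wf x \<theta> \<partial>lborel)"
    and "summable (\<lambda>x. \<integral>\<theta>. indicator A (x, \<theta>) * wf x \<theta> \<partial>lborel)"
proof -
  define F where "F x \<theta> = indicator A (x, \<theta>) * wf x \<theta>" for x \<theta>
  note A[measurable]
  have Fm: "F x \<in> borel_measurable lborel" for x
  proof -
    have "(\<lambda>\<theta>. (x, \<theta>)) \<in> measurable lborel (count_space UNIV \<Otimes>\<^sub>M lborel)" by simp
    then have "(\<lambda>\<theta>. indicator A (x, \<theta>) :: real) \<in> borel_measurable lborel"
      by (rule measurable_compose) (rule borel_measurable_indicator[OF A])
    then show ?thesis unfolding F_def by simp
  qed
  have Fn: "0 \<le> F x \<theta>" for x \<theta> unfolding F_def using wf_nonneg by simp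
  have Fle: "F x \<theta> \<le> wf x \<theta>" for x \<theta> unfolding F_def using wf_nonneg by (simp add: indicator_def)
  have Fi: "integrable lborel (F x)" for x
    by (rule Bochner_Integration.integrable_bound[OF wf_int[of x] Fm]) (use Fn Fle wf_nonneg in auto)
  have Fi_le: "(\<integral>\<theta>. F x \<theta> \<partial>lborel) \<le> fH \<kappa> H x" for x
    unfolding wf_fH[symmetric] by (rule integral_mono[OF Fi wf_int Fle])
  have sm: "summable (\<lambda>x. \<integral>\<theta>. F x \<theta> \<partial>lborel)"
    by (rule summable_comparison_test[OF _ sums_summable[OF fH_sums]]) (use Fn Fi_le in auto)
  then show "summable (\<lambda>x. \<integral>\<theta>. indicator A (x, \<theta>) * wf x \<theta> \<partial>lborel)" by (simp add: F_def)
  have "emeasure N A = (\<integral>\<^sup>+z. ennreal (wf (fst z) (snd z)) * indicator A z \<partial>(count_space UNIV \<Otimes>\<^sub>M lborel))"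
    unfolding N_def by (subst emeasure_density) (auto simp: A)
  also have "\<dots> = (\<integral>\<^sup>+z. ennreal (F (fst z) (snd z)) \<partial>(count_space UNIV \<Otimes>\<^sub>M lborel))"
    by (rule nn_integral_cong) (auto simp: F_def indicator_def)
  also have "\<dots> = (\<integral>\<^sup>+x. \<integral>\<^sup>+\<theta>. ennreal (F x \<theta>) \<partial>lborel \<partial>count_space UNIV)"
  proof -
    have m: "(\<lambda>z. ennreal (F (fst z) (snd z))) \<in> borel_measurable (count_space UNIV \<Otimes>\<^sub>M lborel)"
    proof -
      have e: "(\<lambda>z. ennreal (F (fst z) (snd z))) = (\<lambda>z. ennreal (indicator A z * wf (fst z) (snd z)))"
        by (auto simp: F_def)
      have "(\<lambda>z. ennreal (indicator A z * wf (fst z) (snd z))) \<in> borel_measurable (count_space UNIV \<Otimes>\<^sub>M lborel)"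
        by (intro measurable_compose[OF _ measurable_ennreal] borel_measurable_times borel_measurable_indicator A wf_meas2)
      then show ?thesis unfolding e .
    qed
    show ?thesis using lborel.nn_integral_fst[OF m] by simp
  qed
  also have "\<dots> = (\<Sum>x. \<integral>\<^sup>+\<theta>. ennreal (F x \<theta>) \<partial>lborel)"
    by (rule nn_integral_count_space_nat)
  also have "\<dots> = (\<Sum>x. ennreal (\<integral>\<theta>. F x \<theta> \<partial>lborel))"
    by (rule suminf_cong) (rule nn_integral_eq_integral[OF Fi], simp add: Fn)
  also have "\<dots> = ennreal (\<Sum>x. \<integral>\<theta>. F x \<theta> \<partial>lborel)"
    by (rule suminf_ennreal2[OF _ sm]) (simp add: Fn)
  finally show "emeasure N A = ennreal (\<Sum>x. \<integral>\<theta>. indicator A (x, \<theta>) * wf x \<theta> \<partial>lborel)"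
    by (simp add: F_def)
qed

end


context mixH begin

definition mo :: "nat \<Rightarrow> real" where
  "mo n = (\<integral>lam. lam powr \<kappa> * lam ^ n \<partial>H)"

lemma mo_int: "integrable H (\<lambda>lam. lam powr \<kappa> * lam ^ n)"
proof (rule AE_bound_integrable[OF P, where B="U powr \<kappa> * U ^ n"])
  show "(\<lambda>lam. lam powr \<kappa> * lam ^ n) \<in> borel_measurable H" by (rule meas_H) measurable
  show "AE lam in H. \<bar>lam powr \<kappa> * lam ^ n\<bar> \<le> U powr \<kappa> * U ^ n"
    using AE_LU
  proof eventually_elim
    case (elim lam)
    have l0: "lam > 0" using elim Lpos by simp
    have "\<bar>lam powr \<kappa> * lam ^ n\<bar> = lam powr \<kappa> * lam ^ n" using l0 by simp
    also have "\<dots> \<le> U powr \<kappa> * U ^ n"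
      by (rule mult_mono) (use elim l0 kpos in \<open>auto intro!: powr_mono2 power_mono\<close>)
    finally show ?case .
  qed
qed

lemma mo_bound: "\<bar>mo n\<bar> \<le> U powr \<kappa> * U ^ n"
proof -
  have "\<bar>mo n\<bar> \<le> (\<integral>lam. \<bar>lam powr \<kappa> * lam ^ n\<bar> \<partial>H)"
    unfolding mo_def by (rule integral_abs_bound)
  also have "\<dots> \<le> (\<integral>lam. U powr \<kappa> * U ^ n \<partial>H)"
  proof (rule integral_mono_AE)
    show "integrable H (\<lambda>lam. \<bar>lam powr \<kappa> * lam ^ n\<bar>)" using mo_int by (rule integrable_abs)
    show "integrable H (\<lambda>lam. U powr \<kappa> * U ^ n)"
      using finite_measure.integrable_const[OF prob_space.finite_measure[OF P]] by blast
    show "AE lam in H. \<bar>lam powr \<kappa> * lam ^ n\<bar> \<le> U powr \<kappa> * U ^ n"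
      using AE_LU
    proof eventually_elim
      case (elim lam)
      have l0: "lam > 0" using elim Lpos by simp
      have "\<bar>lam powr \<kappa> * lam ^ n\<bar> = lam powr \<kappa> * lam ^ n" using l0 by simp
      also have "\<dots> \<le> U powr \<kappa> * U ^ n"
        by (rule mult_mono) (use elim l0 kpos in \<open>auto intro!: powr_mono2 power_mono\<close>)
      finally show ?case .
    qed
  qed
  also have "\<dots> = U powr \<kappa> * U ^ n" using prob_space.prob_space[OF P] by simp
  finally show ?thesis .
qed

lemma Mf_series: "(\<lambda>n. mo n * (- \<theta>) ^ n / fact n) sums Mf \<theta>"
proof -
  define f where "f n lam = lam powr \<kappa> * ((- lam * \<theta>) ^ n / fact n)" for n lam
  have pw: "(- lam * \<theta>) ^ n = (- \<theta>) ^ n * lam ^ n" for lam :: real and n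
  proof -
    have "(- lam * \<theta>) ^ n = ((- \<theta>) * lam) ^ n" by (simp add: algebra_simps)
    then show ?thesis by (simp only: power_mult_distrib)
  qed
  have pw2: "(- (lam * \<theta>)) ^ n = (- \<theta>) ^ n * lam ^ n" for lam :: real and n
    using pw[of lam n] by simp
  have fi: "integrable H (f n)" for n
  proof -
    have "integrable H (\<lambda>lam. ((- \<theta>) ^ n / fact n) * (lam powr \<kappa> * lam ^ n))"
      using mo_int by (rule integrable_mult_right)
    then show ?thesis
      by (rule Bochner_Integration.integrable_cong[THEN iffD1, rotated -1]) (auto simp: f_def pw pw2)
  qed
  have fint: "(\<integral>lam. f n lam \<partial>H) = mo n * (- \<theta>) ^ n / fact n" for n
  proof -
    have "(\<integral>lam. f n lam \<partial>H) = (\<integral>lam. ((- \<theta>) ^ n / fact n) * (lam powr \<kappa> * lam ^ n) \<partial>H)"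
      by (rule Bochner_Integration.integral_cong) (auto simp: f_def pw pw2)
    also have "\<dots> = mo n * (- \<theta>) ^ n / fact n" by (simp add: mo_def)
    finally show ?thesis .
  qed
  have fsum: "(\<lambda>n. f n lam) sums (lam powr \<kappa> * exp (- lam * \<theta>))" for lam
  proof -
    have "(\<lambda>n. (- lam * \<theta>) ^ n /\<^sub>R fact n) sums exp (- lam * \<theta>)" by (rule exp_converges)
    then have "(\<lambda>n. lam powr \<kappa> * ((- lam * \<theta>) ^ n /\<^sub>R fact n)) sums (lam powr \<kappa> * exp (- lam * \<theta>))"
      by (rule sums_mult)
    then show ?thesis by (simp add: f_def divide_inverse mult_ac)
  qed
  have nsum: "summable (\<lambda>n. norm (f n lam))" for lam
  proof -
    have "summable (\<lambda>n. inverse (fact n) * \<bar>lam * \<theta>\<bar> ^ n)" by (rule summable_exp)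
    then have "summable (\<lambda>n. \<bar>lam powr \<kappa>\<bar> * (inverse (fact n) * \<bar>lam * \<theta>\<bar> ^ n))"
      by (rule summable_mult)
    then show ?thesis
      by (rule summable_cong[THEN iffD1, rotated])
         (auto simp: f_def abs_mult power_abs divide_inverse mult_ac intro!: always_eventually)
  qed
  have isum: "summable (\<lambda>n. \<integral>lam. norm (f n lam) \<partial>H)"
  proof (rule summable_comparison_test)
    show "summable (\<lambda>n. U powr \<kappa> * (inverse (fact n) * (U * \<bar>\<theta>\<bar>) ^ n))"
      by (rule summable_mult) (rule summable_exp)
    show "\<exists>N. \<forall>n\<ge>N. norm (\<integral>lam. norm (f n lam) \<partial>H) \<le> U powr \<kappa> * (inverse (fact n) * (U * \<bar>\<theta>\<bar>) ^ n)"
    proof (intro exI allI impI)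
      fix n :: nat
      have "(\<integral>lam. norm (f n lam) \<partial>H) = (\<integral>lam. (\<bar>\<theta>\<bar> ^ n / fact n) * \<bar>lam powr \<kappa> * lam ^ n\<bar> \<partial>H)"
        by (rule Bochner_Integration.integral_cong) (auto simp: f_def abs_mult power_abs power_mult_distrib)
      also have "\<dots> = (\<bar>\<theta>\<bar> ^ n / fact n) * (\<integral>lam. \<bar>lam powr \<kappa> * lam ^ n\<bar> \<partial>H)" by simp
      also have "(\<integral>lam. \<bar>lam powr \<kappa> * lam ^ n\<bar> \<partial>H) \<le> U powr \<kappa> * U ^ n"
      proof -
        have "(\<integral>lam. \<bar>lam powr \<kappa> * lam ^ n\<bar> \<partial>H) = (\<integral>lam. lam powr \<kappa> * lam ^ n \<partial>H)"
        proof (rule integral_cong_AE)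
          show "(\<lambda>lam. \<bar>lam powr \<kappa> * lam ^ n\<bar>) \<in> borel_measurable H"
            by (rule borel_measurable_integrable) (rule integrable_abs[OF mo_int])
          show "(\<lambda>lam. lam powr \<kappa> * lam ^ n) \<in> borel_measurable H"
            by (rule borel_measurable_integrable[OF mo_int])
          show "AE lam in H. \<bar>lam powr \<kappa> * lam ^ n\<bar> = lam powr \<kappa> * lam ^ n"
            using AE_pos by eventually_elim simp
        qed
        then show ?thesis using mo_bound[of n] by (simp add: mo_def)
      qed
      then have "(\<bar>\<theta>\<bar> ^ n / fact n) * (\<integral>lam. \<bar>lam powr \<kappa> * lam ^ n\<bar> \<partial>H) \<le> (\<bar>\<theta>\<bar> ^ n / fact n) * (U powr \<kappa> * U ^ n)"
        by (rule mult_left_mono) simp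
      also have "\<dots> = U powr \<kappa> * (inverse (fact n) * (U * \<bar>\<theta>\<bar>) ^ n)"
        by (simp add: power_mult_distrib divide_inverse mult_ac)
      finally show "norm (\<integral>lam. norm (f n lam) \<partial>H) \<le> U powr \<kappa> * (inverse (fact n) * (U * \<bar>\<theta>\<bar>) ^ n)"
        by (simp add: integral_nonneg_AE)
    qed
  qed
  have "(\<lambda>n. \<integral>lam. f n lam \<partial>H) sums (\<integral>lam. (\<Sum>n. f n lam) \<partial>H)"
    by (rule sums_integral[OF fi _ isum]) (use nsum in \<open>simp add: always_eventually\<close>)
  moreover have "(\<integral>lam. (\<Sum>n. f n lam) \<partial>H) = Mf \<theta>"
    unfolding Mf_def using fsum by (simp add: sums_iff)
  ultimately show ?thesis by (simp add: fint)
qed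

definition cf :: "nat \<Rightarrow> complex" where
  "cf n = complex_of_real (mo n * (- 1) ^ n / fact n)"

definition MC :: "complex \<Rightarrow> complex" where
  "MC z = (\<Sum>n. cf n * z ^ n)"

lemma cf_sums: "(\<lambda>n. cf n * z ^ n) sums MC z"
proof -
  have "summable (\<lambda>n. cf n * z ^ n)"
  proof (rule summable_comparison_test)
    show "summable (\<lambda>n. U powr \<kappa> * (inverse (fact n) * (U * cmod z) ^ n))"
      by (rule summable_mult) (rule summable_exp)
    show "\<exists>N. \<forall>n\<ge>N. norm (cf n * z ^ n) \<le> U powr \<kappa> * (inverse (fact n) * (U * cmod z) ^ n)"
    proof (intro exI allI impI)
      fix n :: nat
      have "norm (cf n * z ^ n) = \<bar>mo n\<bar> / fact n * cmod z ^ n"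
        by (simp add: cf_def norm_mult norm_power norm_divide)
      also have "\<dots> \<le> (U powr \<kappa> * U ^ n) / fact n * cmod z ^ n"
        by (intro mult_right_mono divide_right_mono mo_bound) auto
      also have "\<dots> = U powr \<kappa> * (inverse (fact n) * (U * cmod z) ^ n)"
        by (simp add: power_mult_distrib divide_inverse mult_ac)
      finally show "norm (cf n * z ^ n) \<le> U powr \<kappa> * (inverse (fact n) * (U * cmod z) ^ n)" .
    qed
  qed
  then show ?thesis by (simp add: MC_def sums_iff)
qed

lemma MC_real: "MC (complex_of_real \<theta>) = complex_of_real (Mf \<theta>)"
proof -
  have "(\<lambda>n. complex_of_real (mo n * (- \<theta>) ^ n / fact n)) sums complex_of_real (Mf \<theta>)"
    using Mf_series[of \<theta>] by (rule sums_of_real)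
  moreover have "(\<lambda>n. complex_of_real (mo n * (- \<theta>) ^ n / fact n)) = (\<lambda>n. cf n * (complex_of_real \<theta>) ^ n)"
  proof
    fix n
    have "mo n * (- \<theta>) ^ n / fact n = (mo n * (- 1) ^ n / fact n) * \<theta> ^ n"
      by (subst power_minus) (simp only: mult_ac times_divide_eq_right)
    then have "complex_of_real (mo n * (- \<theta>) ^ n / fact n) = complex_of_real (mo n * (- 1) ^ n / fact n) * complex_of_real (\<theta> ^ n)"
      by (simp only: of_real_mult)
    then show "complex_of_real (mo n * (- \<theta>) ^ n / fact n) = cf n * (complex_of_real \<theta>) ^ n"
      by (simp only: cf_def of_real_power)
  qed
  ultimately have "(\<lambda>n. cf n * (complex_of_real \<theta>) ^ n) sums complex_of_real (Mf \<theta>)" by simp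
  then show ?thesis by (rule sums_unique2[OF cf_sums])
qed

lemma MC_holo: "MC holomorphic_on UNIV"
proof -
  have "MC analytic_on UNIV"
    unfolding analytic_on_def
  proof
    fix x :: complex
    have "MC holomorphic_on ball 0 (norm x + 1)"
      by (rule power_series_holomorphic[where a=cf]) (use cf_sums in simp)
    moreover have "ball x 1 \<subseteq> ball 0 (norm x + 1)"
    proof
      fix y assume "y \<in> ball x 1"
      then have a: "norm (x - y) < 1" by (simp add: dist_norm)
      have b: "norm y - norm x \<le> norm (y - x)" by (rule norm_triangle_ineq2)
      have c: "norm (y - x) = norm (x - y)" by (rule norm_minus_commute)
      from a b c have "norm y < norm x + 1" by linarith
      then show "y \<in> ball 0 (norm x + 1)" by (simp add: dist_norm)
    qed
    ultimately show "\<exists>e>0. MC holomorphic_on ball x e"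
      using holomorphic_on_subset zero_less_one by blast
  qed
  then show ?thesis by (rule analytic_imp_holomorphic)
qed

lemma level_countable: "countable {\<theta>. \<theta> > 0 \<and> \<theta> powr a * exp (- \<theta>) * Mf \<theta> = c}"
proof -
  define S where "S = {z::complex. Re z > 0}"
  define G where "G z = z powr (complex_of_real a) * exp (- z) * MC z - complex_of_real c" for z
  define h where "h \<theta> = \<theta> powr a * exp (- \<theta>) * Mf \<theta>" for \<theta>
  have Gr: "G (complex_of_real \<theta>) = complex_of_real (h \<theta> - c)" if "\<theta> > 0" for \<theta>
  proof -
    have e: "exp (- complex_of_real \<theta>) = complex_of_real (exp (- \<theta>))"
      using exp_of_real[of "- \<theta>"] by simp
    have p: "complex_of_real \<theta> powr complex_of_real a = complex_of_real (\<theta> powr a)"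
      using that by (simp add: powr_of_real)
    show ?thesis unfolding G_def h_def e p MC_real by simp
  qed
  have MCS: "MC holomorphic_on S" using MC_holo holomorphic_on_subset by blast
  have holo: "G holomorphic_on S"
    unfolding G_def
  proof (intro holomorphic_intros MCS)
    show "z \<notin> \<real>\<^sub>\<le>\<^sub>0" if "z \<in> S" for z using that by (auto simp: S_def complex_nonpos_Reals_iff)
  qed
  have opn: "open S" unfolding S_def by (rule open_halfspace_Re_gt)
  have conn: "connected S" unfolding S_def by (rule convex_connected[OF convex_halfspace_Re_gt])
  have fs: "fsigma S"
  proof -
    have eq: "S = (\<Union>n::nat. {z. Re z \<ge> 1 / (real n + 1)})"
    proof
      show "S \<subseteq> (\<Union>n::nat. {z. Re z \<ge> 1 / (real n + 1)})"
      proof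
        fix z assume "z \<in> S"
        then have r: "Re z > 0" by (simp add: S_def)
        obtain n :: nat where "inverse (real (Suc n)) < Re z" using reals_Archimedean[OF r] by blast
        then have "1 / (real n + 1) \<le> Re z" by (simp add: inverse_eq_divide add.commute)
        then show "z \<in> (\<Union>n::nat. {z. Re z \<ge> 1 / (real n + 1)})" by blast
      qed
      show "(\<Union>n::nat. {z. Re z \<ge> 1 / (real n + 1)}) \<subseteq> S"
      proof
        fix z assume "z \<in> (\<Union>n::nat. {z. Re z \<ge> 1 / (real n + 1)})"
        then obtain n :: nat where "Re z \<ge> 1 / (real n + 1)" by blast
        moreover have "1 / (real n + 1) > 0" by simp
        ultimately have "Re z > 0" by linarith
        then show "z \<in> S" by (simp add: S_def)
      qed
    qed
    show ?thesis unfolding eq by (rule fsigma.intros) (rule closed_halfspace_Re_ge)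
  qed
  have nc: "\<not> G constant_on S"
  proof
    assume "G constant_on S"
    then obtain k where k: "\<And>z. z \<in> S \<Longrightarrow> G z = k" by (auto simp: constant_on_def)
    have h_eq: "h \<theta> = h 1" if "\<theta> > 0" for \<theta>
    proof -
      have "G (complex_of_real \<theta>) = G (complex_of_real 1)"
        using k[of "complex_of_real \<theta>"] k[of "complex_of_real 1"] that by (simp add: S_def)
      then have "complex_of_real (h \<theta> - c) = complex_of_real (h 1 - c)"
        using Gr[OF that] Gr[of 1] by simp
      then show ?thesis by simp
    qed
    have h1: "h 1 > 0" unfolding h_def using Mf_pos[of 1] by simp
    have "((\<lambda>\<theta>::real. \<theta> powr a * exp (- \<theta>)) \<longlongrightarrow> 0) at_top" by real_asymp
    then have "((\<lambda>\<theta>::real. \<theta> powr a * exp (- \<theta>) * U powr \<kappa>) \<longlongrightarrow> 0) at_top"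
      by (rule tendsto_mult_left_zero)
    then have ev1: "eventually (\<lambda>\<theta>. \<theta> powr a * exp (- \<theta>) * U powr \<kappa> < h 1) at_top"
      using h1 by (rule order_tendstoD(2))
    have ev2: "eventually (\<lambda>\<theta>::real. \<theta> > 0) at_top" by (rule eventually_gt_at_top)
    obtain M where M: "\<And>\<theta>. \<theta> \<ge> M \<Longrightarrow> \<theta> powr a * exp (- \<theta>) * U powr \<kappa> < h 1 \<and> \<theta> > 0"
      using eventually_conj[OF ev1 ev2] by (auto simp: eventually_at_top_linorder)
    have Mpos: "M > 0" and Mlt: "M powr a * exp (- M) * U powr \<kappa> < h 1" using M[of M] by auto
    have "h M \<le> M powr a * exp (- M) * U powr \<kappa>"
      unfolding h_def by (rule mult_left_mono[OF Mf_le]) (use Mpos in auto)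
    with Mlt h_eq[OF Mpos] show False by simp
  qed
  have cz: "countable {z\<in>S. G z = 0}"
    by (rule holomorphic_countable_zeros[OF holo opn conn fs nc])
  have sub: "{\<theta>. \<theta> > 0 \<and> \<theta> powr a * exp (- \<theta>) * Mf \<theta> = c} \<subseteq> Re ` {z\<in>S. G z = 0}"
  proof
    fix \<theta> assume t: "\<theta> \<in> {\<theta>. \<theta> > 0 \<and> \<theta> powr a * exp (- \<theta>) * Mf \<theta> = c}"
    then have "complex_of_real \<theta> \<in> {z\<in>S. G z = 0}"
      using Gr[of \<theta>] by (simp add: S_def h_def)
    moreover have "\<theta> = Re (complex_of_real \<theta>)" by simp
    ultimately show "\<theta> \<in> Re ` {z\<in>S. G z = 0}" by blast
  qed
  show ?thesis by (rule countable_subset[OF sub countable_image[OF cz]])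
qed

end

context mixH begin

lemma sets_N[measurable_cong]: "sets N = sets (count_space UNIV \<Otimes>\<^sub>M lborel)"
  unfolding N_def by simp

lemma space_N: "space N = UNIV"
  unfolding N_def by (simp add: space_pair_measure)

lemma measure_N:
  assumes A: "A \<in> sets (count_space UNIV \<Otimes>\<^sub>M lborel)"
  shows "measure N A = (\<Sum>x. \<integral>\<theta>. indicator A (x, \<theta>) * wf x \<theta> \<partial>lborel)"
proof -
  have "0 \<le> (\<Sum>x. \<integral>\<theta>. indicator A (x, \<theta>) * wf x \<theta> \<partial>lborel)"
    by (rule suminf_nonneg[OF TRANS(2)[OF A]]) (auto intro!: integral_nonneg_AE simp: wf_nonneg)
  then show ?thesis unfolding measure_def TRANS(1)[OF A] by simp
qed

lemma N_total: "emeasure N (space N) = 1"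
proof -
  have "emeasure N UNIV = ennreal (\<Sum>x. \<integral>\<theta>. indicator UNIV (x, \<theta>) * wf x \<theta> \<partial>lborel)"
    by (rule TRANS) (use sets.top[of "count_space UNIV \<Otimes>\<^sub>M lborel"] in \<open>simp add: space_pair_measure\<close>)
  also have "\<dots> = ennreal (\<Sum>x. fH \<kappa> H x)" by (simp add: wf_fH)
  also have "\<dots> = 1" using fH_sums by (simp add: sums_iff)
  finally show ?thesis by (simp add: space_N)
qed

lemma N_prob: "prob_space N"
  by (rule prob_spaceI) (rule N_total)

lemma N_fin: "finite_measure N"
  using N_prob prob_space.finite_measure by blast

lemma post_meas[measurable]: "(\<lambda>z. post \<kappa> H (snd z) (fst z)) \<in> borel_measurable (count_space UNIV \<Otimes>\<^sub>M lborel)"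
proof -
  have "(\<lambda>z. (\<lambda>i z. post \<kappa> H (snd z) i) (fst z) z) \<in> borel_measurable (count_space UNIV \<Otimes>\<^sub>M lborel)"
    by (rule measurable_compose_countable'[where I=UNIV]) (auto simp: post_def pois_def)
  then show ?thesis by simp
qed

lemma post_set:
  assumes "B \<in> sets borel"
  shows "{z. post \<kappa> H (snd z) (fst z) \<in> B} \<in> sets (count_space UNIV \<Otimes>\<^sub>M lborel)"
proof -
  have "(\<lambda>z. post \<kappa> H (snd z) (fst z)) -` B \<inter> space (count_space UNIV \<Otimes>\<^sub>M lborel) \<in> sets (count_space UNIV \<Otimes>\<^sub>M lborel)"
    by (rule measurable_sets[OF post_meas assms])
  then show ?thesis by (simp add: space_pair_measure vimage_def)
qed

lemma post_alg:
  assumes "\<theta> > 0"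
  shows "post \<kappa> H \<theta> x = \<theta> powr (real x + \<kappa> - 1) * exp (- \<theta>) * Mf \<theta> / (fact x * Gamma \<kappa> * fH \<kappa> H x)"
proof -
  have p: "\<theta> ^ x * \<theta> powr (\<kappa> - 1) = \<theta> powr (real x + \<kappa> - 1)"
    using assms by (simp add: powr_realpow[symmetric] powr_add[symmetric] add_diff_eq)
  have "post \<kappa> H \<theta> x = (\<theta> ^ x * \<theta> powr (\<kappa> - 1)) * exp (- \<theta>) * Mf \<theta> / (fact x * Gamma \<kappa> * fH \<kappa> H x)"
    unfolding post_def pois_def gH_Mf by (simp add: field_simps)
  then show ?thesis unfolding p .
qed

lemma level_null: "measure N {z. post \<kappa> H (snd z) (fst z) = k} = 0"
proof -
  define A where "A = {z. post \<kappa> H (snd z) (fst z) = k}"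
  have A: "A \<in> sets (count_space UNIV \<Otimes>\<^sub>M lborel)" unfolding A_def using post_set[of "{k}"] by simp
  have zero: "(\<integral>\<theta>. indicator A (x, \<theta>) * wf x \<theta> \<partial>lborel) = 0" for x
  proof -
    define c where "c = k * (fact x * Gamma \<kappa> * fH \<kappa> H x)"
    define Z where "Z = {\<theta>. \<theta> > 0 \<and> \<theta> powr (real x + \<kappa> - 1) * exp (- \<theta>) * Mf \<theta> = c}"
    have cZ: "countable Z" unfolding Z_def by (rule level_countable)
    have pos: "fact x * Gamma \<kappa> * fH \<kappa> H x > 0"
      using fH_pos Gamma_real_pos[OF kpos] by simp
    have "AE \<theta> in lborel. \<theta> \<notin> Z"
      by (rule AE_not_in[OF countable_imp_null_set_lborel[OF cZ]])
    then have "AE \<theta> in lborel. indicator A (x, \<theta>) * wf x \<theta> = 0"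
    proof eventually_elim
      case (elim \<theta>)
      show ?case
      proof (cases "\<theta> > 0")
        case True
        show ?thesis
        proof (cases "(x, \<theta>) \<in> A")
          case True': True
          then have "post \<kappa> H \<theta> x = k" by (simp add: A_def)
          then have "\<theta> powr (real x + \<kappa> - 1) * exp (- \<theta>) * Mf \<theta> = c"
            unfolding post_alg[OF True] c_def using pos by (auto simp: divide_eq_eq split: if_splits)
          then have "\<theta> \<in> Z" using True by (simp add: Z_def)
          with elim show ?thesis by simp
        qed simp
      next
        case False
        then have "wf x \<theta> = 0"
          by (cases "\<theta> = 0") (auto simp: wf_def gH_Mf)
        then show ?thesis by simp
      qed
    qed
    then show ?thesis by (rule integral_eq_zero_AE)
  qed
  show ?thesis unfolding A_def[symmetric] measure_N[OF A] zero by simp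
qed

definition Ek :: "real \<Rightarrow> (nat \<times> real) set" where
  "Ek k = {z. post \<kappa> H (snd z) (fst z) \<ge> k}"

lemma Ek_sets: "Ek k \<in> sets (count_space UNIV \<Otimes>\<^sub>M lborel)"
  unfolding Ek_def using post_set[of "{k..}"] by simp

lemma Ek_setsN: "Ek k \<in> sets N"
  using Ek_sets sets_N by simp

lemma Ek_mono: "k \<le> k' \<Longrightarrow> Ek k' \<subseteq> Ek k"
  by (auto simp: Ek_def)

lemma hpd_N: "hpd_mass \<kappa> H k = measure N (Ek k)"
proof -
  have "hpd_mass \<kappa> H k = (\<Sum>x. \<integral>\<theta>. indicator (Ek k) (x, \<theta>) * wf x \<theta> \<partial>lborel)"
    unfolding hpd_mass_def set_lebesgue_integral_def
    by (intro suminf_cong Bochner_Integration.integral_cong refl) (auto simp: wf_def indicator_def Ek_def)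
  then show ?thesis using measure_N[OF Ek_sets] by simp
qed

lemma post_nonneg: "\<theta> \<ge> 0 \<Longrightarrow> post \<kappa> H \<theta> x \<ge> 0"
  unfolding post_def using pois_nonneg gH_nonneg fH_pos[of x] by simp

lemma hpd_0: "hpd_mass \<kappa> H 0 = 1"
proof -
  have "hpd_mass \<kappa> H 0 = (\<Sum>x. \<integral>\<theta>. indicator (Ek 0) (x, \<theta>) * wf x \<theta> \<partial>lborel)"
    using hpd_N measure_N[OF Ek_sets] by simp
  also have "\<dots> = (\<Sum>x. \<integral>\<theta>. wf x \<theta> \<partial>lborel)"
    by (intro suminf_cong Bochner_Integration.integral_cong refl) (auto simp: wf_def indicator_def Ek_def post_nonneg)
  also have "\<dots> = 1" using fH_sums by (simp add: wf_fH sums_iff)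
  finally show ?thesis .
qed

lemma hpd_mono: "k \<le> k' \<Longrightarrow> hpd_mass \<kappa> H k' \<le> hpd_mass \<kappa> H k"
  unfolding hpd_N
  by (rule finite_measure.finite_measure_mono[OF N_fin]) (auto simp: Ek_mono Ek_setsN)

lemma hpd_nonneg: "hpd_mass \<kappa> H k \<ge> 0"
  unfolding hpd_N by simp

lemma hpd_small: assumes "e > 0" shows "\<exists>n::nat. hpd_mass \<kappa> H (real n) < e"
proof -
  have "(\<lambda>n. measure N (Ek (real n))) \<longlonglongrightarrow> measure N (\<Inter>n. Ek (real n))"
    by (rule finite_measure.finite_Lim_measure_decseq[OF N_fin])
       (auto simp: Ek_setsN decseq_def intro!: Ek_mono)
  moreover have "(\<Inter>n. Ek (real n)) = {}"
  proof -
    have "z \<notin> (\<Inter>n. Ek (real n))" for z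
    proof -
      obtain n :: nat where "post \<kappa> H (snd z) (fst z) < real n" using reals_Archimedean2 by blast
      then show ?thesis by (auto simp: Ek_def intro!: exI[of _ n])
    qed
    then show ?thesis by blast
  qed
  ultimately have "(\<lambda>n. hpd_mass \<kappa> H (real n)) \<longlonglongrightarrow> 0" by (simp add: hpd_N)
  then have "eventually (\<lambda>n. hpd_mass \<kappa> H (real n) < e) sequentially"
    using assms by (rule order_tendstoD)
  then obtain M where "\<forall>n\<ge>M. hpd_mass \<kappa> H (real n) < e" by (auto simp: eventually_sequentially)
  then show ?thesis by blast
qed

lemma khat_exact:
  assumes b: "0 < \<beta>" "\<beta> < 1"
  shows "hpd_mass \<kappa> H (khat \<kappa> H \<beta>) = 1 - \<beta>"
proof -
  define S where "S = {k. k \<ge> 0 \<and> hpd_mass \<kappa> H k \<ge> 1 - \<beta>}"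
  have kh: "khat \<kappa> H \<beta> = Sup S" unfolding khat_def S_def ..
  have S0: "0 \<in> S" unfolding S_def using hpd_0 b by simp
  then have Sne: "S \<noteq> {}" by blast
  obtain n0 :: nat where n0: "hpd_mass \<kappa> H (real n0) < 1 - \<beta>" using hpd_small[of "1 - \<beta>"] b by auto
  have Sb: "k \<le> real n0" if "k \<in> S" for k
  proof (rule ccontr)
    assume "\<not> k \<le> real n0"
    then have "hpd_mass \<kappa> H k \<le> hpd_mass \<kappa> H (real n0)" by (intro hpd_mono) simp
    with n0 that show False by (simp add: S_def)
  qed
  have bdd: "bdd_above S" by (rule bdd_aboveI[where M="real n0"]) (rule Sb)
  define K where "K = Sup S"
  have K0: "K \<ge> 0" unfolding K_def using cSup_upper[OF S0 bdd] .
  have lo: "hpd_mass \<kappa> H K \<ge> 1 - \<beta>"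
  proof -
    define a where "a j = K - 1 / (real j + 1)" for j :: nat
    have "(\<lambda>j. measure N (Ek (a j))) \<longlonglongrightarrow> measure N (\<Inter>j. Ek (a j))"
    proof (rule finite_measure.finite_Lim_measure_decseq[OF N_fin])
      show "range (\<lambda>j. Ek (a j)) \<subseteq> sets N" using Ek_setsN by auto
      show "decseq (\<lambda>j. Ek (a j))"
        unfolding decseq_def
      proof (intro allI impI)
        fix m n :: nat assume "m \<le> n"
        then have "1 / (real n + 1) \<le> 1 / (real m + 1)" by (intro divide_left_mono) auto
        then have "a m \<le> a n" by (simp add: a_def)
        then show "Ek (a n) \<subseteq> Ek (a m)" by (auto simp: Ek_def)
      qed
    qed
    moreover have "(\<Inter>j. Ek (a j)) = Ek K"
    proof
      show "Ek K \<subseteq> (\<Inter>j. Ek (a j))"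
        by (auto simp: Ek_def a_def) (smt (verit) divide_nonneg_nonneg of_nat_0_le_iff)
      show "(\<Inter>j. Ek (a j)) \<subseteq> Ek K"
      proof
        fix z assume z: "z \<in> (\<Inter>j. Ek (a j))"
        have "post \<kappa> H (snd z) (fst z) \<ge> K - 1 / (real j + 1)" for j
          using z by (auto simp: Ek_def a_def)
        moreover have "(\<lambda>j. K - 1 / (real j + 1)) \<longlonglongrightarrow> K - 0"
        proof (rule tendsto_diff)
          show "(\<lambda>j. 1 / (real j + 1)) \<longlonglongrightarrow> 0"
            using LIMSEQ_inverse_real_of_nat by (simp add: inverse_eq_divide add.commute)
        qed simp
        ultimately have "K \<le> post \<kappa> H (snd z) (fst z)"
          by (intro LIMSEQ_le_const2[where X="\<lambda>j. K - 1 / (real j + 1)"]) (simp_all add: LIMSEQ_le_const2)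
        then show "z \<in> Ek K" by (simp add: Ek_def)
      qed
    qed
    moreover have "measure N (Ek (a j)) \<ge> 1 - \<beta>" for j
    proof -
      have "a j < K" by (simp add: a_def)
      then obtain s where s: "s \<in> S" "a j < s" using less_cSup_iff[OF Sne bdd] K_def by auto
      then have "hpd_mass \<kappa> H (a j) \<ge> hpd_mass \<kappa> H s" by (intro hpd_mono) simp
      with s show ?thesis by (simp add: S_def hpd_N)
    qed
    ultimately show ?thesis unfolding hpd_N by (metis LIMSEQ_le_const)
  qed
  have hi: "hpd_mass \<kappa> H K \<le> 1 - \<beta>"
  proof -
    define b where "b j = K + 1 / (real j + 1)" for j :: nat
    have bS: "hpd_mass \<kappa> H (b j) < 1 - \<beta>" for j
    proof -
      have "b j > K" by (simp add: b_def)
      then have "b j \<notin> S" using cSup_upper[OF _ bdd] K_def by force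
      moreover have "b j \<ge> 0" using K0 by (simp add: b_def)
      ultimately show ?thesis by (simp add: S_def)
    qed
    define G where "G = {z. post \<kappa> H (snd z) (fst z) > K}"
    have "(\<lambda>j. measure N (Ek (b j))) \<longlonglongrightarrow> measure N (\<Union>j. Ek (b j))"
    proof (rule finite_measure.finite_Lim_measure_incseq[OF N_fin])
      show "range (\<lambda>j. Ek (b j)) \<subseteq> sets N" using Ek_setsN by auto
      show "incseq (\<lambda>j. Ek (b j))"
        unfolding incseq_def
      proof (intro allI impI)
        fix m n :: nat assume "m \<le> n"
        then have "1 / (real n + 1) \<le> 1 / (real m + 1)" by (intro divide_left_mono) auto
        then have "b n \<le> b m" by (simp add: b_def)
        then show "Ek (b m) \<subseteq> Ek (b n)" by (auto simp: Ek_def)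
      qed
    qed
    moreover have "(\<Union>j. Ek (b j)) = G"
    proof
      show "(\<Union>j. Ek (b j)) \<subseteq> G"
        by (auto simp: Ek_def b_def G_def) (smt (verit) divide_pos_pos of_nat_0_le_iff)
      show "G \<subseteq> (\<Union>j. Ek (b j))"
      proof
        fix z assume "z \<in> G"
        then have d: "post \<kappa> H (snd z) (fst z) - K > 0" by (simp add: G_def)
        then obtain j :: nat where "1 / (real j + 1) < post \<kappa> H (snd z) (fst z) - K"
          using reals_Archimedean[OF d] by (auto simp: inverse_eq_divide add.commute)
        then show "z \<in> (\<Union>j. Ek (b j))" by (auto simp: Ek_def b_def intro!: exI[of _ j])
      qed
    qed
    ultimately have "measure N G \<le> 1 - \<beta>"
      using bS unfolding hpd_N by (metis LIMSEQ_le_const2 less_imp_le)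
    moreover have "measure N (Ek K) \<le> measure N G + measure N {z. post \<kappa> H (snd z) (fst z) = K}"
    proof -
      have e: "Ek K = G \<union> {z. post \<kappa> H (snd z) (fst z) = K}" by (auto simp: Ek_def G_def)
      have G: "G \<in> sets N" unfolding G_def using post_set[of "{K<..}"] sets_N by simp
      have Z: "{z. post \<kappa> H (snd z) (fst z) = K} \<in> sets N" using post_set[of "{K}"] sets_N by simp
      show ?thesis unfolding e
        by (rule measure_subadditive[OF G Z]) (simp_all add: finite_measure.emeasure_finite[OF N_fin])
    qed
    ultimately show ?thesis unfolding hpd_N using level_null by simp
  qed
  show ?thesis using lo hi kh K_def by simp
qed

lemma wfA_int:
  assumes A: "A \<in> sets (count_space UNIV \<Otimes>\<^sub>M lborel)"
  shows "integrable lborel (\<lambda>\<theta>. indicator A (x, \<theta>) * wf x \<theta>)"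
proof -
  have "(\<lambda>\<theta>. (x, \<theta>)) \<in> measurable lborel (count_space UNIV \<Otimes>\<^sub>M lborel)" by simp
  then have m: "(\<lambda>\<theta>. indicator A (x, \<theta>) :: real) \<in> borel_measurable lborel"
    by (rule measurable_compose) (rule borel_measurable_indicator[OF A])
  show ?thesis
    by (rule Bochner_Integration.integrable_bound[OF wf_int[of x]]) (use m wf_nonneg in \<open>auto simp: indicator_def\<close>)
qed

definition Iset :: "real \<Rightarrow> (nat \<times> real) set" where
  "Iset \<beta> = {z. snd z \<ge> 0 \<and> post \<kappa> H (snd z) (fst z) \<ge> khat \<kappa> H \<beta>}"

lemma Iset_sets: "Iset \<beta> \<in> sets (count_space UNIV \<Otimes>\<^sub>M lborel)"
proof -
  have "{z::nat\<times>real. snd z \<ge> 0} = UNIV \<times> {0..}" by auto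
  moreover have "(UNIV::nat set) \<times> {0::real..} \<in> sets (count_space UNIV \<Otimes>\<^sub>M lborel)"
    by (rule pair_measureI) auto
  ultimately have "{z::nat\<times>real. snd z \<ge> 0} \<in> sets (count_space UNIV \<Otimes>\<^sub>M lborel)" by simp
  moreover have "Ek (khat \<kappa> H \<beta>) \<in> sets (count_space UNIV \<Otimes>\<^sub>M lborel)" by (rule Ek_sets)
  ultimately have "{z::nat\<times>real. snd z \<ge> 0} \<inter> Ek (khat \<kappa> H \<beta>) \<in> sets (count_space UNIV \<Otimes>\<^sub>M lborel)" by blast
  moreover have "{z::nat\<times>real. snd z \<ge> 0} \<inter> Ek (khat \<kappa> H \<beta>) = Iset \<beta>" by (auto simp: Ek_def Iset_def)
  ultimately show ?thesis by simp
qed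

lemma Iset_Ihat: "indicator (Ihat \<kappa> H \<beta> x) \<theta> = (indicator (Iset \<beta>) (x, \<theta>) :: real)"
  by (simp add: indicator_def Ihat_def Iset_def)

lemma cov_self:
  assumes "0 < \<beta>" "\<beta> < 1"
  shows "coverage \<kappa> H H \<beta> = 1 - \<beta>"
proof -
  have "coverage \<kappa> H H \<beta> = hpd_mass \<kappa> H (khat \<kappa> H \<beta>)"
    unfolding coverage_def hpd_mass_def set_lebesgue_integral_def
    by (intro suminf_cong Bochner_Integration.integral_cong refl) (auto simp: indicator_def Ihat_def)
  then show ?thesis using khat_exact[OF assms] by simp
qed

end

lemma TV_nonneg: "TV g g' \<ge> 0"
  unfolding TV_def set_lebesgue_integral_def by (auto intro!: integral_nonneg_AE)

lemma cov_bound: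
  assumes H: "mixH \<kappa> L U H" and Hs: "mixH \<kappa> L U Hs" and b: "0 < \<beta>" "\<beta> < 1"
  shows "\<bar>coverage \<kappa> Hs H \<beta> - (1 - \<beta>)\<bar> \<le> 2 * TV (gH \<kappa> H) (gH \<kappa> Hs)"
    and "TV (gH \<kappa> H) (gH \<kappa> Hs) \<le> 1"
proof -
  interpret A: mixH \<kappa> L U H by (rule H)
  interpret B: mixH \<kappa> L U Hs by (rule Hs)
  let ?g = "gH \<kappa> H" and ?gs = "gH \<kappa> Hs"
  define I where "I = A.Iset \<beta>"
  have Is: "I \<in> sets (count_space UNIV \<Otimes>\<^sub>M lborel)" unfolding I_def by (rule A.Iset_sets)
  define a where "a x = (\<integral>\<theta>. indicator I (x, \<theta>) * B.wf x \<theta> \<partial>lborel)" for x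
  define b where "b x = (\<integral>\<theta>. indicator I (x, \<theta>) * A.wf x \<theta> \<partial>lborel)" for x
  define d where "d x = (\<integral>\<theta>. indicator {0..} \<theta> * pois \<theta> x * \<bar>?g \<theta> - ?gs \<theta>\<bar> \<partial>lborel)" for x
  have cov_a: "coverage \<kappa> Hs H \<beta> = (\<Sum>x. a x)"
    unfolding coverage_def set_lebesgue_integral_def a_def I_def
    by (intro suminf_cong Bochner_Integration.integral_cong refl) (auto simp: A.Iset_Ihat B.wf_def)
  have cov_b: "coverage \<kappa> H H \<beta> = (\<Sum>x. b x)"
    unfolding coverage_def set_lebesgue_integral_def b_def I_def
    by (intro suminf_cong Bochner_Integration.integral_cong refl) (auto simp: A.Iset_Ihat A.wf_def)
  have sa: "summable a" unfolding a_def by (rule B.TRANS(2)[OF Is])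
  have sb: "summable b" unfolding b_def by (rule A.TRANS(2)[OF Is])
  have Sint: "integrable lborel (\<lambda>\<theta>. indicator {0..} \<theta> * \<bar>?g \<theta> - ?gs \<theta>\<bar>)"
  proof -
    have "integrable lborel (\<lambda>\<theta>. \<bar>indicator {0..} \<theta> * ?g \<theta> - indicator {0..} \<theta> * ?gs \<theta>\<bar>)"
      by (intro integrable_abs Bochner_Integration.integrable_diff A.g_int B.g_int)
    then show ?thesis
      by (rule Bochner_Integration.integrable_cong[THEN iffD1, rotated -1]) (auto simp: indicator_def)
  qed
  have dm: "(\<lambda>\<theta>. indicator {0..} \<theta> * pois \<theta> x * \<bar>?g \<theta> - ?gs \<theta>\<bar>) \<in> borel_measurable lborel" for x
    unfolding pois_def by measurable
  have dn: "0 \<le> indicator {0..} \<theta> * pois \<theta> x * \<bar>?g \<theta> - ?gs \<theta>\<bar>" for x \<theta>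
    by (cases "\<theta> \<ge> 0") (auto simp: pois_nonneg)
  have ds: "(\<lambda>x. indicator {0..} \<theta> * pois \<theta> x * \<bar>?g \<theta> - ?gs \<theta>\<bar>) sums (indicator {0..} \<theta> * \<bar>?g \<theta> - ?gs \<theta>\<bar>)" for \<theta>
  proof (cases "\<theta> \<ge> 0")
    case True
    have "(\<lambda>x. \<bar>?g \<theta> - ?gs \<theta>\<bar> * pois \<theta> x) sums (\<bar>?g \<theta> - ?gs \<theta>\<bar> * 1)"
      by (rule sums_mult[OF pois_sums[OF True]])
    then show ?thesis using True by (simp add: mult_ac)
  qed simp
  have dsums: "d sums (\<integral>\<theta>. indicator {0..} \<theta> * \<bar>?g \<theta> - ?gs \<theta>\<bar> \<partial>lborel)"
    unfolding d_def by (rule SI_sums[OF dm dn ds Sint])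
  have TVeq: "2 * TV ?g ?gs = (\<integral>\<theta>. indicator {0..} \<theta> * \<bar>?g \<theta> - ?gs \<theta>\<bar> \<partial>lborel)"
    unfolding TV_def set_lebesgue_integral_def by simp
  have diff_le: "\<bar>a x - b x\<bar> \<le> d x" for x
  proof -
    have ia: "integrable lborel (\<lambda>\<theta>. indicator I (x, \<theta>) * B.wf x \<theta>)" by (rule B.wfA_int[OF Is])
    have ib: "integrable lborel (\<lambda>\<theta>. indicator I (x, \<theta>) * A.wf x \<theta>)" by (rule A.wfA_int[OF Is])
    have "a x - b x = (\<integral>\<theta>. indicator I (x, \<theta>) * B.wf x \<theta> - indicator I (x, \<theta>) * A.wf x \<theta> \<partial>lborel)"
      unfolding a_def b_def by (rule Bochner_Integration.integral_diff[OF ia ib, symmetric])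
    also have "\<bar>\<dots>\<bar> \<le> (\<integral>\<theta>. \<bar>indicator I (x, \<theta>) * B.wf x \<theta> - indicator I (x, \<theta>) * A.wf x \<theta>\<bar> \<partial>lborel)"
      by (rule integral_abs_bound)
    also have "\<dots> \<le> d x"
      unfolding d_def
    proof (rule integral_mono)
      show "integrable lborel (\<lambda>\<theta>. \<bar>indicator I (x, \<theta>) * B.wf x \<theta> - indicator I (x, \<theta>) * A.wf x \<theta>\<bar>)"
        by (intro integrable_abs Bochner_Integration.integrable_diff ia ib)
      show "integrable lborel (\<lambda>\<theta>. indicator {0..} \<theta> * pois \<theta> x * \<bar>?g \<theta> - ?gs \<theta>\<bar>)"
        by (rule SI_int[OF dm dn ds Sint])
      show "\<bar>indicator I (x, \<theta>) * B.wf x \<theta> - indicator I (x, \<theta>) * A.wf x \<theta>\<bar>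
          \<le> indicator {0..} \<theta> * pois \<theta> x * \<bar>?g \<theta> - ?gs \<theta>\<bar>" for \<theta>
      proof (cases "\<theta> \<ge> 0")
        case True
        have "\<bar>indicator I (x, \<theta>) * B.wf x \<theta> - indicator I (x, \<theta>) * A.wf x \<theta>\<bar>
            = indicator I (x, \<theta>) * (pois \<theta> x * \<bar>?g \<theta> - ?gs \<theta>\<bar>)"
          using True pois_nonneg[OF True, of x]
          by (simp add: A.wf_def B.wf_def indicator_def abs_mult right_diff_distrib[symmetric] abs_minus_commute)
        also have "\<dots> \<le> 1 * (pois \<theta> x * \<bar>?g \<theta> - ?gs \<theta>\<bar>)"
          by (rule mult_right_mono) (auto simp: indicator_def pois_nonneg[OF True])
        finally show ?thesis using True by simp
      next
        case False
        then show ?thesis by (simp add: A.wf_def B.wf_def)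
      qed
    qed
    finally show ?thesis .
  qed
  have sd: "summable d" using dsums by (simp add: sums_iff)
  have sab: "summable (\<lambda>x. \<bar>a x - b x\<bar>)"
    by (rule summable_comparison_test[OF _ sd]) (use diff_le in auto)
  have "\<bar>coverage \<kappa> Hs H \<beta> - (1 - \<beta>)\<bar> = \<bar>(\<Sum>x. a x) - (\<Sum>x. b x)\<bar>"
    using cov_a cov_b A.cov_self[OF b] by simp
  also have "\<dots> = \<bar>\<Sum>x. a x - b x\<bar>" using suminf_diff[OF sa sb] by simp
  also have "\<dots> \<le> (\<Sum>x. \<bar>a x - b x\<bar>)" by (rule summable_rabs[OF sab])
  also have "\<dots> \<le> (\<Sum>x. d x)" by (rule suminf_le[OF diff_le sab sd])
  also have "\<dots> = 2 * TV ?g ?gs" using dsums TVeq by (simp add: sums_iff)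
  finally show "\<bar>coverage \<kappa> Hs H \<beta> - (1 - \<beta>)\<bar> \<le> 2 * TV ?g ?gs" .
  have "(\<integral>\<theta>. indicator {0..} \<theta> * \<bar>?g \<theta> - ?gs \<theta>\<bar> \<partial>lborel)
      \<le> (\<integral>\<theta>. indicator {0..} \<theta> * ?g \<theta> + indicator {0..} \<theta> * ?gs \<theta> \<partial>lborel)"
  proof (rule integral_mono[OF Sint])
    show "integrable lborel (\<lambda>\<theta>. indicator {0..} \<theta> * ?g \<theta> + indicator {0..} \<theta> * ?gs \<theta>)"
      by (intro Bochner_Integration.integrable_add A.g_int B.g_int)
    show "indicator {0..} \<theta> * \<bar>?g \<theta> - ?gs \<theta>\<bar> \<le> indicator {0..} \<theta> * ?g \<theta> + indicator {0..} \<theta> * ?gs \<theta>" for \<theta>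
      using A.gH_nonneg[of \<theta>] B.gH_nonneg[of \<theta>] by (auto simp: indicator_def)
  qed
  also have "\<dots> = 2"
    using Bochner_Integration.integral_add[OF A.g_int B.g_int] A.g_int1 B.g_int1 by simp
  finally show "TV ?g ?gs \<le> 1" using TVeq by simp
qed

lemma sum_lists_prod:
  fixes f :: "nat \<Rightarrow> real"
  assumes A: "finite A"
  shows "(\<Sum>xs\<in>{xs. set xs \<subseteq> A \<and> length xs = n}. prod_list (map f xs)) = (\<Sum>x\<in>A. f x) ^ n"
proof (induction n)
  case 0
  have "{xs. set xs \<subseteq> A \<and> length xs = 0} = {[]}" by auto
  then show ?case by simp
next
  case (Suc n)
  let ?S = "{xs. set xs \<subseteq> A \<and> length xs = n}"
  have "(\<Sum>xs\<in>{xs. set xs \<subseteq> A \<and> length xs = Suc n}. prod_list (map f xs))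
      = (\<Sum>p\<in>?S \<times> A. prod_list (map f ((\<lambda>(xs, n). n # xs) p)))"
    unfolding lists_length_Suc_eq by (rule sum.reindex[unfolded comp_def]) (rule inj_split_Cons)
  also have "\<dots> = (\<Sum>xs\<in>?S. \<Sum>x\<in>A. f x * prod_list (map f xs))"
    by (subst sum.cartesian_product) (auto intro!: sum.cong)
  also have "\<dots> = (\<Sum>xs\<in>?S. prod_list (map f xs)) * (\<Sum>x\<in>A. f x)"
    by (simp add: sum_distrib_right sum_distrib_left mult_ac)
  finally show ?case using Suc by simp
qed

lemma prod_list_nonneg': "(\<And>x. 0 \<le> f x) \<Longrightarrow> 0 \<le> prod_list (map f xs)" for f :: "nat \<Rightarrow> real"
  by (induction xs) auto

lemma lists_summable:
  fixes f :: "nat \<Rightarrow> real" and Q :: "nat list \<Rightarrow> real"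
  assumes fn: "\<And>x. 0 \<le> f x" and fs: "summable f"
    and Qn: "\<And>xs. 0 \<le> Q xs" and Qb: "\<And>xs. Q xs \<le> C * prod_list (map f xs)"
  shows "Q summable_on {xs. length xs = n}"
proof (rule nonneg_bdd_above_summable_on)
  show "0 \<le> Q xs" for xs by (rule Qn)
  show "bdd_above (sum Q ` {F. F \<subseteq> {xs. length xs = n} \<and> finite F})"
  proof (rule bdd_aboveI[where M="max 0 C * (suminf f) ^ n"])
    fix s assume "s \<in> sum Q ` {F. F \<subseteq> {xs. length xs = n} \<and> finite F}"
    then obtain F where F: "F \<subseteq> {xs. length xs = n}" "finite F" and s: "s = sum Q F" by auto
    define K where "K = Suc (Max (insert 0 (\<Union>xs\<in>F. set xs)))"
    have fin: "finite (insert 0 (\<Union>xs\<in>F. set xs))" using F by auto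
    have FK: "F \<subseteq> {xs. set xs \<subseteq> {..<K} \<and> length xs = n}"
    proof
      fix xs assume xs: "xs \<in> F"
      have "x < K" if "x \<in> set xs" for x
      proof -
        have "x \<le> Max (insert 0 (\<Union>xs\<in>F. set xs))" by (rule Max_ge[OF fin]) (use that xs in auto)
        then show ?thesis by (simp add: K_def)
      qed
      with xs F show "xs \<in> {xs. set xs \<subseteq> {..<K} \<and> length xs = n}" by auto
    qed
    have "s \<le> sum (\<lambda>xs. max 0 C * prod_list (map f xs)) F"
      unfolding s
    proof (rule sum_mono)
      fix xs
      have "Q xs \<le> C * prod_list (map f xs)" by (rule Qb)
      also have "\<dots> \<le> max 0 C * prod_list (map f xs)"
        by (rule mult_right_mono) (auto intro: prod_list_nonneg' fn)
      finally show "Q xs \<le> max 0 C * prod_list (map f xs)" .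
    qed
    also have "\<dots> \<le> sum (\<lambda>xs. max 0 C * prod_list (map f xs)) {xs. set xs \<subseteq> {..<K} \<and> length xs = n}"
      by (rule sum_mono2[OF finite_lists_length_eq FK]) (auto intro!: mult_nonneg_nonneg prod_list_nonneg' fn)
    also have "\<dots> = max 0 C * (\<Sum>x<K. f x) ^ n"
      by (simp add: sum_distrib_left[symmetric] sum_lists_prod)
    also have "\<dots> \<le> max 0 C * (suminf f) ^ n"
      by (intro mult_left_mono power_mono sum_le_suminf fs) (auto intro: fn sum_nonneg)
    finally show "s \<le> max 0 C * (suminf f) ^ n" .
  qed
qed

lemma sample_bound:
  fixes f :: "nat \<Rightarrow> real" and F G :: "nat list \<Rightarrow> real"
  assumes fn: "\<And>x. 0 \<le> f x" and fs: "summable f"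
    and c0: "c \<ge> 0" and Fn: "\<And>xs. 0 \<le> F xs" and FG: "\<And>xs. F xs \<le> c * G xs" and Gb: "\<And>xs. G xs \<le> B"
  shows "infsum (\<lambda>xs. prod_list (map f xs) * F xs) {xs. length xs = n}
       \<le> c * infsum (\<lambda>xs. prod_list (map f xs) * G xs) {xs. length xs = n}"
proof -
  have Pn: "0 \<le> prod_list (map f xs)" for xs by (rule prod_list_nonneg') (rule fn)
  have Gn: "0 \<le> c * G xs" for xs using Fn FG order_trans by blast
  have s1: "(\<lambda>xs. prod_list (map f xs) * F xs) summable_on {xs. length xs = n}"
  proof (rule lists_summable[OF fn fs, where C="max 0 (c * B)"])
    show "0 \<le> prod_list (map f xs) * F xs" for xs using Pn Fn by simp
    show "prod_list (map f xs) * F xs \<le> max 0 (c * B) * prod_list (map f xs)" for xs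
    proof -
      have "F xs \<le> c * G xs" by (rule FG)
      also have "\<dots> \<le> c * B" by (rule mult_left_mono[OF Gb c0])
      finally have "F xs \<le> max 0 (c * B)" by simp
      from mult_left_mono[OF this Pn[of xs]] show ?thesis by (simp add: mult.commute)
    qed
  qed
  have s2: "(\<lambda>xs. prod_list (map f xs) * (c * G xs)) summable_on {xs. length xs = n}"
  proof (rule lists_summable[OF fn fs, where C="max 0 (c * B)"])
    show "0 \<le> prod_list (map f xs) * (c * G xs)" for xs using Pn Gn by simp
    show "prod_list (map f xs) * (c * G xs) \<le> max 0 (c * B) * prod_list (map f xs)" for xs
    proof -
      have "c * G xs \<le> c * B" by (rule mult_left_mono[OF Gb c0])
      then have "c * G xs \<le> max 0 (c * B)" by simp
      from mult_left_mono[OF this Pn[of xs]] show ?thesis by (simp add: mult.commute)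
    qed
  qed
  have "infsum (\<lambda>xs. prod_list (map f xs) * F xs) {xs. length xs = n}
      \<le> infsum (\<lambda>xs. prod_list (map f xs) * (c * G xs)) {xs. length xs = n}"
    by (rule infsum_mono[OF s1 s2]) (use Pn FG in \<open>auto intro: mult_left_mono\<close>)
  also have "\<dots> = infsum (\<lambda>xs. c * (prod_list (map f xs) * G xs)) {xs. length xs = n}"
    by (simp add: mult_ac)
  also have "\<dots> = c * infsum (\<lambda>xs. prod_list (map f xs) * G xs) {xs. length xs = n}"
    by (rule infsum_cmult_right')
  finally show ?thesis .
qed

theorem theorem4p2:
  fixes \<kappa> L U \<alpha> :: real
  assumes "\<kappa> > 0" and "0 < L" and "L < U"
    and "0 < \<alpha>" and "\<alpha> < 1/2"
    and TVrate: "\<exists>C>0. \<forall>Hhat Hs n. is_npmle \<kappa> L U Hhat \<and> Hs \<in> probs_on L U \<and> n \<ge> 2 \<longrightarrow>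
        sample_exp \<kappa> Hs n (\<lambda>xs. TV (gH \<kappa> (Hhat xs)) (gH \<kappa> Hs)) \<le> C * rate \<kappa> \<alpha> n"
  shows "\<exists>C'>0. \<forall>Hhat Hs n \<beta>. is_npmle \<kappa> L U Hhat \<and> Hs \<in> probs_on L U \<and> n \<ge> 2
        \<and> 0 < \<beta> \<and> \<beta> < 1 \<longrightarrow>
        sample_exp \<kappa> Hs n (\<lambda>xs. \<bar>coverage \<kappa> Hs (Hhat xs) \<beta> - (1 - \<beta>)\<bar>) \<le> C' * rate \<kappa> \<alpha> n"
proof -
  obtain C where C: "C > 0" and hyp: "\<And>Hhat Hs n. is_npmle \<kappa> L U Hhat \<Longrightarrow> Hs \<in> probs_on L U \<Longrightarrow> n \<ge> 2 \<Longrightarrow>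
        sample_exp \<kappa> Hs n (\<lambda>xs. TV (gH \<kappa> (Hhat xs)) (gH \<kappa> Hs)) \<le> C * rate \<kappa> \<alpha> n"
    using TVrate by blast
  have "\<forall>Hhat Hs n \<beta>. is_npmle \<kappa> L U Hhat \<and> Hs \<in> probs_on L U \<and> n \<ge> 2
        \<and> 0 < \<beta> \<and> \<beta> < 1 \<longrightarrow>
        sample_exp \<kappa> Hs n (\<lambda>xs. \<bar>coverage \<kappa> Hs (Hhat xs) \<beta> - (1 - \<beta>)\<bar>) \<le> (2 * C) * rate \<kappa> \<alpha> n"
  proof (intro allI impI)
    fix Hhat :: "nat list \<Rightarrow> real measure" and Hs :: "real measure" and n :: nat and \<beta> :: real
    assume a: "is_npmle \<kappa> L U Hhat \<and> Hs \<in> probs_on L U \<and> n \<ge> 2 \<and> 0 < \<beta> \<and> \<beta> < 1"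
    have mHs: "mixH \<kappa> L U Hs" using a assms by (simp add: mixH_def)
    have mH: "mixH \<kappa> L U (Hhat xs)" for xs using a assms by (simp add: mixH_def is_npmle_def)
    have fn: "0 \<le> fH \<kappa> Hs x" for x using mixH.fH_pos[OF mHs, of x] by simp
    have fs: "summable (fH \<kappa> Hs)" using mixH.fH_sums[OF mHs] by (simp add: sums_iff)
    have "sample_exp \<kappa> Hs n (\<lambda>xs. \<bar>coverage \<kappa> Hs (Hhat xs) \<beta> - (1 - \<beta>)\<bar>)
        \<le> 2 * sample_exp \<kappa> Hs n (\<lambda>xs. TV (gH \<kappa> (Hhat xs)) (gH \<kappa> Hs))"
      unfolding sample_exp_def
    proof (rule sample_bound[OF fn fs, where B=1])
      show "0 \<le> (2::real)" by simp
      show "0 \<le> \<bar>coverage \<kappa> Hs (Hhat xs) \<beta> - (1 - \<beta>)\<bar>" for xs by simp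
      show "\<bar>coverage \<kappa> Hs (Hhat xs) \<beta> - (1 - \<beta>)\<bar> \<le> 2 * TV (gH \<kappa> (Hhat xs)) (gH \<kappa> Hs)" for xs
        using cov_bound(1)[OF mH mHs] a by blast
      show "TV (gH \<kappa> (Hhat xs)) (gH \<kappa> Hs) \<le> 1" for xs
        using cov_bound(2)[OF mH mHs] a by blast
    qed
    also have "\<dots> \<le> 2 * (C * rate \<kappa> \<alpha> n)"
      using hyp[of Hhat Hs n] a by simp
    finally show "sample_exp \<kappa> Hs n (\<lambda>xs. \<bar>coverage \<kappa> Hs (Hhat xs) \<beta> - (1 - \<beta>)\<bar>) \<le> (2 * C) * rate \<kappa> \<alpha> n"
      by (simp add: mult.assoc)
  qed
  moreover have "2 * C > 0" using C by simp
  ultimately show ?thesis by blast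
qed

end
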